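(* Let $\mathbb{F}$ be a field with a non-identity involution $x\mapsto x^\star$, $\mathbb{K}=\{x\in\mathbb{F}:x^\star=x\}$, $V$ an $n$-dimensional $\mathbb{F}$-vector space, and $b$ a non-degenerate Hermitian form on $V$ with Witt index $\nu$. Let $\mathcal{F}$ be a maximal partially complete $b$-singular flag of $V$. Then $\mathrm{WH}_{b,\mathcal{F}}$ is a $\mathbb{K}$-linear subspace of $\mathrm{End}_{\mathbb{F}}(V)$ with $\dim_{\mathbb{K}}\mathrm{WH}_{b,\mathcal{F}}=\nu(2n-2\nu-1)$.
   Context: A sesquilinear form $b$ on $V$ is linear in the second argument and satisfies $b(\alpha x+x',y)=\alpha^\star b(x,y)+b(x',y)$; it is Hermitian if $b(y,x)=b(x,y)^\star$; non-degenerate if $b(x,y)=0$ for all $x$ forces $y=0$. An $\mathbb{F}$-subspace $X$ is totally $b$-singular if $b(x,y)=0$ for all $x,y\in X$; the Witt index is the maximal $\mathbb{F}$-dimension of such a subspace. An $\mathbb{F}$-linear endomorphism $u$ is $b$-Hermitian if $b(u(x),y)=b(x,u(y))$ for all $x,y$; $\mathcal{H}_b$ is the set of these. A flag $(F_0,\dots,F_p)$ of $\mathbb{F}$-subspaces is partially complete if $\dim_{\mathbb{F}}F_i=i$, $b$-singular if $F_p$ is totally $b$-singular, maximal if $p=\nu$. $\mathrm{WH}_{b,\mathcal{F}}$ is the set of nilpotent $u\in\mathcal{H}_b$ with $u(F_i)\subseteq F_i$ for all $i$. *)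

theory Defs
  imports Complex_Main "HOL-Library.Function_Algebras"
begin

definition nontrivial_involution :: "('f::field \<Rightarrow> 'f) \<Rightarrow> bool" where
  "nontrivial_involution st \<longleftrightarrow>
     (\<forall>x y. st (x + y) = st x + st y) \<and> (\<forall>x y. st (x * y) = st x * st y) \<and>
     (\<forall>x. st (st x) = x) \<and> st \<noteq> id"

definition fixed_field :: "('f \<Rightarrow> 'f) \<Rightarrow> 'f set" where
  "fixed_field st = {x. st x = x}"

definition sesquilinear ::
  "('f::field \<Rightarrow> 'f) \<Rightarrow> ('f \<Rightarrow> 'v::ab_group_add \<Rightarrow> 'v) \<Rightarrow> ('v \<Rightarrow> 'v \<Rightarrow> 'f) \<Rightarrow> bool" where
  "sesquilinear st scale b \<longleftrightarrow>
     (\<forall>a x y y'. b x (scale a y + y') = a * b x y + b x y') \<and>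
     (\<forall>a x x' y. b (scale a x + x') y = st a * b x y + b x' y)"

definition hermitian_form ::
  "('f::field \<Rightarrow> 'f) \<Rightarrow> ('f \<Rightarrow> 'v::ab_group_add \<Rightarrow> 'v) \<Rightarrow> ('v \<Rightarrow> 'v \<Rightarrow> 'f) \<Rightarrow> bool" where
  "hermitian_form st scale b \<longleftrightarrow> sesquilinear st scale b \<and> (\<forall>x y. b y x = st (b x y))"

definition non_degenerate :: "('v::zero \<Rightarrow> 'v \<Rightarrow> 'f::zero) \<Rightarrow> bool" where
  "non_degenerate b \<longleftrightarrow> (\<forall>y. (\<forall>x. b x y = 0) \<longrightarrow> y = 0)"

definition totally_singular ::
  "('f::field \<Rightarrow> 'v::ab_group_add \<Rightarrow> 'v) \<Rightarrow> ('v \<Rightarrow> 'v \<Rightarrow> 'f) \<Rightarrow> 'v set \<Rightarrow> bool" where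
  "totally_singular scale b X \<longleftrightarrow> module.subspace scale X \<and> (\<forall>x\<in>X. \<forall>y\<in>X. b x y = 0)"

definition witt_index ::
  "('f::field \<Rightarrow> 'v::ab_group_add \<Rightarrow> 'v) \<Rightarrow> ('v \<Rightarrow> 'v \<Rightarrow> 'f) \<Rightarrow> nat" where
  "witt_index scale b = Max {vector_space.dim scale X | X. totally_singular scale b X}"

definition herm_endos ::
  "('f::field \<Rightarrow> 'v::ab_group_add \<Rightarrow> 'v) \<Rightarrow> ('v \<Rightarrow> 'v \<Rightarrow> 'f) \<Rightarrow> ('v \<Rightarrow> 'v) set" where
  "herm_endos scale b = {u. Vector_Spaces.linear scale scale u \<and> (\<forall>x y. b (u x) y = b x (u y))}"

definition nilpotent_map :: "('v::zero \<Rightarrow> 'v) \<Rightarrow> bool" where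
  "nilpotent_map u \<longleftrightarrow> (\<exists>k. (u ^^ k) = (\<lambda>_. 0))"

definition partially_complete_flag ::
  "('f::field \<Rightarrow> 'v::ab_group_add \<Rightarrow> 'v) \<Rightarrow> (nat \<Rightarrow> 'v set) \<Rightarrow> nat \<Rightarrow> bool" where
  "partially_complete_flag scale Fl p \<longleftrightarrow>
     (\<forall>i\<le>p. module.subspace scale (Fl i) \<and> vector_space.dim scale (Fl i) = i) \<and>
     (\<forall>i<p. Fl i \<subseteq> Fl (Suc i))"

definition singular_flag ::
  "('f::field \<Rightarrow> 'v::ab_group_add \<Rightarrow> 'v) \<Rightarrow> ('v \<Rightarrow> 'v \<Rightarrow> 'f) \<Rightarrow> (nat \<Rightarrow> 'v set) \<Rightarrow> nat \<Rightarrow> bool" where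
  "singular_flag scale b Fl p \<longleftrightarrow> partially_complete_flag scale Fl p \<and> totally_singular scale b (Fl p)"

definition WH ::
  "('f::field \<Rightarrow> 'v::ab_group_add \<Rightarrow> 'v) \<Rightarrow> ('v \<Rightarrow> 'v \<Rightarrow> 'f) \<Rightarrow> (nat \<Rightarrow> 'v set) \<Rightarrow> nat \<Rightarrow> ('v \<Rightarrow> 'v) set" where
  "WH scale b Fl p = {u \<in> herm_endos scale b. nilpotent_map u \<and> (\<forall>i\<le>p. u ` Fl i \<subseteq> Fl i)}"

definition K_subspace :: "'f set \<Rightarrow> ('f \<Rightarrow> 'w::ab_group_add \<Rightarrow> 'w) \<Rightarrow> 'w set \<Rightarrow> bool" where
  "K_subspace K smul S \<longleftrightarrow> 0 \<in> S \<and> (\<forall>x\<in>S. \<forall>y\<in>S. x + y \<in> S) \<and> (\<forall>k\<in>K. \<forall>x\<in>S. smul k x \<in> S)"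

definition K_span :: "'f set \<Rightarrow> ('f \<Rightarrow> 'w::ab_group_add \<Rightarrow> 'w) \<Rightarrow> 'w set \<Rightarrow> 'w set" where
  "K_span K smul B = {\<Sum>v\<in>T. smul (c v) v | T c. finite T \<and> T \<subseteq> B \<and> (\<forall>v\<in>T. c v \<in> K)}"

definition K_independent :: "'f::zero set \<Rightarrow> ('f \<Rightarrow> 'w::ab_group_add \<Rightarrow> 'w) \<Rightarrow> 'w set \<Rightarrow> bool" where
  "K_independent K smul B \<longleftrightarrow>
     (\<forall>T c. finite T \<and> T \<subseteq> B \<and> (\<forall>v\<in>T. c v \<in> K) \<and> (\<Sum>v\<in>T. smul (c v) v) = 0 \<longrightarrow> (\<forall>v\<in>T. c v = 0))"

definition K_dim_eq :: "'f::zero set \<Rightarrow> ('f \<Rightarrow> 'w::ab_group_add \<Rightarrow> 'w) \<Rightarrow> 'w set \<Rightarrow> nat \<Rightarrow> bool" where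
  "K_dim_eq K smul S d \<longleftrightarrow>
     (\<exists>B. finite B \<and> card B = d \<and> B \<subseteq> S \<and> K_independent K smul B \<and> K_span K smul B = S)"

end

theory Submission
  imports Defs
begin

lemma sum_fun_apply: "(\<Sum>i\<in>S. g i) x = (\<Sum>i\<in>S. (g i) x)"
  by (induction S rule: infinite_finite_induct) auto

locale HB = finite_dimensional_vector_space scale Bas
  for scale :: "'f::field \<Rightarrow> 'v::ab_group_add \<Rightarrow> 'v" and Bas +
  fixes st :: "'f \<Rightarrow> 'f" and b :: "'v \<Rightarrow> 'v \<Rightarrow> 'f" and th :: 'f
  assumes st_add: "st (x + y) = st x + st y"
    and st_mult: "st (x * y) = st x * st y"
    and st_st: "st (st x) = x"
    and th: "st th \<noteq> th"
    and herm: "hermitian_form st scale b"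
    and nondeg: "non_degenerate b"
begin

lemma st_0[simp]: "st 0 = 0"
proof -
  have "st 0 + st 0 = st 0 + 0" using st_add[of 0 0] by simp
  then show ?thesis by (rule add_left_imp_eq)
qed
lemma st_uminus[simp]: "st (- x) = - st x"
proof -
  have "st x + st (- x) = 0" using st_add[of x "-x"] by simp
  then show ?thesis using minus_unique by metis
qed
lemma st_diff[simp]: "st (x - y) = st x - st y"
  using st_add[of x "-y"] by simp
lemma st_1[simp]: "st 1 = 1"
proof -
  have "st 1 * st 1 = st 1" using st_mult[of 1 1] by simp
  moreover have "st 1 \<noteq> 0"
  proof
    assume "st 1 = 0"
    then have "st (st 1) = 0" using st_0 by simp
    then show False using st_st[of 1] by simp
  qed
  ultimately show ?thesis
    using mult_left_cancel[of "st 1" "st 1" 1] by simp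
qed
lemma st_inverse[simp]: "st (inverse x) = inverse (st x)"
proof (cases "x = 0")
  case False
  then have "st x * st (inverse x) = 1" using st_mult[of x "inverse x"] by simp
  then show ?thesis using inverse_unique[of "st x" "st (inverse x)"] by simp
qed simp
lemma st_divide[simp]: "st (x / y) = st x / st y"
  by (simp add: divide_inverse st_mult)
lemma st_eq_iff[simp]: "st x = st y \<longleftrightarrow> x = y"
  by (metis st_st)
lemma st_eq0[simp]: "st x = 0 \<longleftrightarrow> x = 0"
  by (metis st_0 st_st)
lemma st_sum: "st (\<Sum>i\<in>S. g i) = (\<Sum>i\<in>S. st (g i))"
  by (induction S rule: infinite_finite_induct) (auto simp: st_add)
declare st_add[simp] st_mult[simp] st_st[simp]

lemma b_sesq: "b x (scale a y + y') = a * b x y + b x y'" "b (scale a x + x') y = st a * b x y + b x' y"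
  using herm unfolding hermitian_form_def sesquilinear_def by blast+
lemma b_sym: "b y x = st (b x y)"
  using herm unfolding hermitian_form_def by blast

lemma b_add_r[simp]: "b x (y + z) = b x y + b x z"
  using b_sesq(1)[of x 1 y z] by simp
lemma b_add_l[simp]: "b (x + y) z = b x z + b y z"
  using b_sesq(2)[of 1 x y z] by simp
lemma b_0_r[simp]: "b x 0 = 0" using b_add_r[of x 0 0] by (metis add_cancel_right_right add_0)
lemma b_0_l[simp]: "b 0 x = 0" using b_add_l[of 0 0 x] by (metis add_cancel_right_right add_0)
lemma b_scale_r[simp]: "b x (scale a y) = a * b x y"
  using b_sesq(1)[of x a y 0] by simp
lemma b_scale_l[simp]: "b (scale a x) y = st a * b x y"
  using b_sesq(2)[of a x 0 y] by simp
lemma b_minus_r[simp]: "b x (- y) = - b x y"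
proof -
  have "b x y + b x (-y) = 0" using b_add_r[of x y "-y"] by simp
  from minus_unique[OF this] show ?thesis by simp
qed
lemma b_minus_l[simp]: "b (- x) y = - b x y"
proof -
  have "b x y + b (-x) y = 0" using b_add_l[of x "-x" y] by simp
  from minus_unique[OF this] show ?thesis by simp
qed
lemma b_diff_r[simp]: "b x (y - z) = b x y - b x z"
  using b_add_r[of x y "-z"] by simp
lemma b_diff_l[simp]: "b (x - y) z = b x z - b y z"
  using b_add_l[of x "-y" z] by simp
lemma b_sum_r: "b x (\<Sum>i\<in>S. g i) = (\<Sum>i\<in>S. b x (g i))"
  by (induction S rule: infinite_finite_induct) auto
lemma b_sum_l: "b (\<Sum>i\<in>S. g i) y = (\<Sum>i\<in>S. b (g i) y)"
  by (induction S rule: infinite_finite_induct) auto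

lemma st_b[simp]: "st (b x y) = b y x" using b_sym[of y x] by simp

lemma nondeg_r: "(\<And>x. b x y = 0) \<Longrightarrow> y = 0"
  using nondeg unfolding non_degenerate_def by auto
lemma nondeg_l: "x = 0" if "\<And>y. b x y = 0"
proof -
  have "\<And>y. b y x = 0" using that b_sym[of _ x] by simp
  then show ?thesis using nondeg_r by blast
qed


lemma lin_add: "Vector_Spaces.linear scale scale u \<Longrightarrow> u (x + y) = u x + u y"
  unfolding Vector_Spaces.linear_iff by blast
lemma lin_scale: "Vector_Spaces.linear scale scale u \<Longrightarrow> u (scale c x) = scale c (u x)"
  unfolding Vector_Spaces.linear_iff by blast
lemma lin_0: "Vector_Spaces.linear scale scale u \<Longrightarrow> u 0 = 0"
  using lin_scale[of u 0 0] by simp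
lemma lin_diff: "Vector_Spaces.linear scale scale u \<Longrightarrow> u (x - y) = u x - u y"
proof -
  assume l: "Vector_Spaces.linear scale scale u"
  have "u (x - y) + u y = u x" using lin_add[OF l, of "x - y" y] by simp
  then show ?thesis by (simp add: eq_diff_eq)
qed
lemma lin_sum: "Vector_Spaces.linear scale scale u \<Longrightarrow> u (\<Sum>i\<in>S. g i) = (\<Sum>i\<in>S. u (g i))"
  by (induction S rule: infinite_finite_induct) (auto simp: lin_0 lin_add)
lemma lin_span: "Vector_Spaces.linear scale scale u \<Longrightarrow> u ` S \<subseteq> span T \<Longrightarrow> u ` span S \<subseteq> span T"
proof -
  assume l: "Vector_Spaces.linear scale scale u" and s: "u ` S \<subseteq> span T"
  interpret lu: Vector_Spaces.linear scale scale u by (rule l)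
  have "u ` span S = span (u ` S)" using lu.span_image by simp
  also have "\<dots> \<subseteq> span T" using s by (simp add: span_minimal)
  finally show ?thesis .
qed
lemma lin_funpow: "Vector_Spaces.linear scale scale u \<Longrightarrow> Vector_Spaces.linear scale scale (u ^^ m)"
proof (induction m)
  case 0 then show ?case unfolding Vector_Spaces.linear_iff using vector_space_axioms by simp
next
  case (Suc m)
  then show ?case unfolding Vector_Spaces.linear_iff using vector_space_axioms by (auto simp: lin_add lin_scale)
qed

end

locale WD = HB scale Bas st b th
  for scale :: "'f::field \<Rightarrow> 'v::ab_group_add \<Rightarrow> 'v" and Bas st b th +
  fixes nu :: nat and e f :: "nat \<Rightarrow> 'v" and Fl :: "nat \<Rightarrow> 'v set"
  assumes ee: "i < nu \<Longrightarrow> j < nu \<Longrightarrow> b (e i) (e j) = 0"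
    and ef: "i < nu \<Longrightarrow> j < nu \<Longrightarrow> b (e i) (f j) = (if i = j then 1 else 0)"
    and ff: "i < nu \<Longrightarrow> j < nu \<Longrightarrow> b (f i) (f j) = 0"
    and Fl_eq: "i \<le> nu \<Longrightarrow> Fl i = span (e ` {..<i})"
    and maxl: "\<And>y. (\<forall>i<nu. b (e i) y = 0) \<Longrightarrow> b y y = 0 \<Longrightarrow> y \<in> span (e ` {..<nu})"
begin

lemma fe: "i < nu \<Longrightarrow> j < nu \<Longrightarrow> b (f i) (e j) = (if i = j then 1 else 0)"
  using ef[of j i] b_sym[of "f i" "e j"] by (auto simp del: st_eq0)

definition W where "W = span (e ` {..<nu})"
definition Aset where "Aset = {x. \<forall>i<nu. b (e i) x = 0 \<and> b (f i) x = 0}"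
definition Pp where "Pp = {x. \<forall>i<nu. b (e i) x = 0}"
definition pr where "pr x = x - (\<Sum>i<nu. scale (b (f i) x) (e i)) - (\<Sum>i<nu. scale (b (e i) x) (f i))"

lemma fE: "j < nu \<Longrightarrow> b (f j) (\<Sum>i<nu. scale (c i) (e i)) = c j"
proof -
  assume j: "j < nu"
  have "b (f j) (\<Sum>i<nu. scale (c i) (e i)) = (\<Sum>i<nu. if j = i then c i else 0)"
    unfolding b_sum_r using j by (intro sum.cong) (auto simp: fe)
  then show ?thesis using j by simp
qed
lemma eF: "j < nu \<Longrightarrow> b (e j) (\<Sum>i<nu. scale (c i) (f i)) = c j"
proof -
  assume j: "j < nu"
  have "b (e j) (\<Sum>i<nu. scale (c i) (f i)) = (\<Sum>i<nu. if j = i then c i else 0)"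
    unfolding b_sum_r using j by (intro sum.cong) (auto simp: ef)
  then show ?thesis using j by simp
qed
lemma eE: "j < nu \<Longrightarrow> b (e j) (\<Sum>i<nu. scale (c i) (e i)) = 0"
  unfolding b_sum_r by (intro sum.neutral) (auto simp: ee)
lemma fF: "j < nu \<Longrightarrow> b (f j) (\<Sum>i<nu. scale (c i) (f i)) = 0"
  unfolding b_sum_r by (intro sum.neutral) (auto simp: ff)

lemma pr_A: "pr x \<in> Aset"
  unfolding Aset_def pr_def by (auto simp: fE eF eE fF)

lemma decomp: "x = (\<Sum>i<nu. scale (b (f i) x) (e i)) + (\<Sum>i<nu. scale (b (e i) x) (f i)) + pr x"
  unfolding pr_def by simp

lemma subspace_rker: "subspace {x. \<forall>v\<in>S. b v x = 0}"
  unfolding subspace_def by auto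
lemma subspace_lker: "subspace {x. \<forall>v\<in>S. b x v = 0}"
  unfolding subspace_def by auto

lemma subspace_A: "subspace Aset"
  unfolding subspace_def Aset_def by auto
lemma subspace_Pp: "subspace Pp"
  unfolding subspace_def Pp_def by auto

lemma span_e_expand:
  assumes "k \<le> nu" "w \<in> span (e ` {..<k})"
  shows "w = (\<Sum>i<k. scale (b (f i) w) (e i)) \<and> (\<forall>i<nu. b (e i) w = 0)
     \<and> (\<forall>i. k \<le> i \<and> i < nu \<longrightarrow> b (f i) w = 0)"
proof -
  let ?T = "{w. w = (\<Sum>i<k. scale (b (f i) w) (e i)) \<and> (\<forall>i<nu. b (e i) w = 0)
     \<and> (\<forall>i. k \<le> i \<and> i < nu \<longrightarrow> b (f i) w = 0)}"
  have sub: "subspace ?T"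
    unfolding subspace_def
  proof (intro conjI ballI allI)
    fix x y assume x: "x \<in> ?T" and y: "y \<in> ?T"
    have "x + y = (\<Sum>i<k. scale (b (f i) x) (e i)) + (\<Sum>i<k. scale (b (f i) y) (e i))"
      using x y by simp
    also have "\<dots> = (\<Sum>i<k. scale (b (f i) (x + y)) (e i))"
      by (simp add: sum.distrib scale_left_distrib)
    finally have e1: "x + y = (\<Sum>i<k. scale (b (f i) (x + y)) (e i))" .
    show "x + y \<in> ?T" unfolding mem_Collect_eq using x y by (intro conjI e1) auto
  next
    fix c x assume x: "x \<in> ?T"
    have "scale c x = scale c (\<Sum>i<k. scale (b (f i) x) (e i))"
      using x by simp
    also have "\<dots> = (\<Sum>i<k. scale (b (f i) (scale c x)) (e i))"
      by (simp add: scale_sum_right)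
    finally have e1: "scale c x = (\<Sum>i<k. scale (b (f i) (scale c x)) (e i))" .
    show "scale c x \<in> ?T" unfolding mem_Collect_eq using x by (intro conjI e1) auto
  qed simp
  have "e ` {..<k} \<subseteq> ?T"
  proof
    fix w assume "w \<in> e ` {..<k}"
    then obtain j where j: "j < k" "w = e j" by auto
    have jn: "j < nu" using j assms by auto
    have "(\<Sum>i<k. scale (b (f i) (e j)) (e i)) = (\<Sum>i<k. if i = j then e j else 0)"
      using assms jn by (intro sum.cong) (auto simp: fe)
    also have "\<dots> = e j" using j by simp
    finally show "w \<in> ?T" using j jn assms by (auto simp: ee fe)
  qed
  then have "span (e ` {..<k}) \<subseteq> ?T" using sub by (rule span_minimal)
  then show ?thesis using assms by auto
qed


lemma W_expand: "w \<in> W \<Longrightarrow> w = (\<Sum>i<nu. scale (b (f i) w) (e i)) \<and> (\<forall>i<nu. b (e i) w = 0)"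
  using span_e_expand[of nu w] unfolding W_def by auto

lemma pr_W: "w \<in> W \<Longrightarrow> pr w = 0"
proof -
  assume w: "w \<in> W"
  then have "(\<Sum>i<nu. scale (b (e i) w) (f i)) = 0" using W_expand by simp
  then show ?thesis unfolding pr_def using W_expand[OF w] by simp
qed

lemma e_W: "i < nu \<Longrightarrow> e i \<in> W"
  unfolding W_def by (simp add: span_base)

lemma subspace_W: "subspace W" unfolding W_def by simp

lemma A_W_0: "a \<in> Aset \<Longrightarrow> a \<in> W \<Longrightarrow> a = 0"
proof -
  assume a: "a \<in> Aset" "a \<in> W"
  then have "a = (\<Sum>i<nu. scale (b (f i) a) (e i))" using W_expand by blast
  also have "\<dots> = 0" using a(1) unfolding Aset_def by simp
  finally show ?thesis .
qed

lemma W_Pp_l: "w \<in> W \<Longrightarrow> x \<in> Pp \<Longrightarrow> b w x = 0"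
proof -
  assume w: "w \<in> W" and x: "x \<in> Pp"
  have "b w x = b (\<Sum>i<nu. scale (b (f i) w) (e i)) x" using W_expand[OF w] by simp
  also have "\<dots> = 0" unfolding b_sum_l using x unfolding Pp_def by simp
  finally show ?thesis .
qed
lemma W_Pp_r: "w \<in> W \<Longrightarrow> x \<in> Pp \<Longrightarrow> b x w = 0"
  using W_Pp_l b_sym by (metis st_0)

lemma A_Pp: "Aset \<subseteq> Pp" unfolding Aset_def Pp_def by auto
lemma W_Pp: "W \<subseteq> Pp" unfolding Pp_def using W_expand by auto

lemma maxl': "y \<in> Pp \<Longrightarrow> b y y = 0 \<Longrightarrow> y \<in> W"
  using maxl unfolding Pp_def W_def by auto

lemma aniso: "a \<in> Aset \<Longrightarrow> b a a = 0 \<Longrightarrow> a = 0"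
  using maxl' A_Pp A_W_0 by blast


definition Cond where "Cond u \<longleftrightarrow> Vector_Spaces.linear scale scale u \<and> (\<forall>x y. b (u x) y = b x (u y))
   \<and> (\<forall>k<nu. u (e k) \<in> span (e ` {..<k})) \<and> (\<forall>x\<in>Pp. u x \<in> W)"

lemma herm_pow: "(\<forall>x y. b (u x) y = b x (u y)) \<Longrightarrow> b ((u^^m) x) y = b x ((u^^m) y)"
proof (induction m arbitrary: y)
  case (Suc m)
  have "b ((u^^Suc m) x) y = b ((u^^m) x) (u y)" using Suc.prems by simp
  also have "\<dots> = b x ((u^^m) (u y))" using Suc by blast
  also have "\<dots> = b x ((u^^Suc m) y)" by (simp add: funpow_swap1)
  finally show ?case .
qed simp

lemma E_step: "k < nu \<Longrightarrow> x \<in> span (e ` {..<Suc k}) \<Longrightarrow> x - scale (b (f k) x) (e k) \<in> span (e ` {..<k})"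
proof -
  assume k: "k < nu" and x: "x \<in> span (e ` {..<Suc k})"
  have "x = (\<Sum>i<Suc k. scale (b (f i) x) (e i))" using span_e_expand[of "Suc k" x] k x by auto
  then have "x - scale (b (f k) x) (e k) = (\<Sum>i<k. scale (b (f i) x) (e i))"
    by (simp only: sum.lessThan_Suc) (metis add_diff_cancel_right')
  also have "\<dots> \<in> span (e ` {..<k})" by (intro span_sum span_scale span_base) auto
  finally show ?thesis .
qed

lemma E_mono: "i \<le> j \<Longrightarrow> span (e ` {..<i}) \<subseteq> span (e ` {..<j})"
  by (intro span_mono image_mono) auto

lemma part_a:
  assumes u: "u \<in> WH scale b Fl nu" and k: "k < nu"
  shows "u (e k) \<in> span (e ` {..<k})"
proof -
  have lin: "Vector_Spaces.linear scale scale u" and nil: "nilpotent_map u"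
    and fl0: "\<forall>i\<le>nu. u ` Fl i \<subseteq> Fl i" using u unfolding WH_def herm_endos_def by auto
  have fl: "u ` span (e ` {..<j}) \<subseteq> span (e ` {..<j})" if "j \<le> nu" for j
    using fl0 that Fl_eq by auto
  obtain N where N: "(u ^^ N) = (\<lambda>_. 0)" using nil unfolding nilpotent_map_def by auto
  define c where "c = b (f k) (u (e k))"
  have step: "u x \<in> span (e ` {..<Suc k}) \<and> b (f k) (u x) = c * b (f k) x"
    if x: "x \<in> span (e ` {..<Suc k})" for x
  proof
    show "u x \<in> span (e ` {..<Suc k})" using fl[of "Suc k"] k x by auto
    define r where "r = x - scale (b (f k) x) (e k)"
    have r: "r \<in> span (e ` {..<k})" unfolding r_def using E_step k x by blast
    have "u r \<in> span (e ` {..<k})" using fl[of k] k r by auto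
    then have ur: "b (f k) (u r) = 0" using span_e_expand[of k "u r"] k by auto
    have "x = scale (b (f k) x) (e k) + r" unfolding r_def by simp
    then have "u x = scale (b (f k) x) (u (e k)) + u r" using lin by (metis lin_add lin_scale)
    then show "b (f k) (u x) = c * b (f k) x" using ur unfolding c_def by simp
  qed
  have pow: "(u^^m) x \<in> span (e ` {..<Suc k}) \<and> b (f k) ((u^^m) x) = c^m * b (f k) x"
    if x: "x \<in> span (e ` {..<Suc k})" for x m
  proof (induction m)
    case (Suc m)
    then show ?case using step[of "(u^^m) x"] by simp
  qed (use x in simp)
  have ek: "e k \<in> span (e ` {..<Suc k})" by (intro span_base) auto
  have "c ^ N = 0" using pow[OF ek, of N] N fe[OF k k] by simp
  then have c0: "c = 0" by simp
  have "u (e k) \<in> span (e ` {..<Suc k})" using step[OF ek] by blast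
  from E_step[OF k this] show ?thesis using c0 unfolding c_def by simp
qed

lemma part_b:
  assumes u: "u \<in> WH scale b Fl nu" and x: "x \<in> Pp"
  shows "u x \<in> W"
proof -
  have lin: "Vector_Spaces.linear scale scale u" and nil: "nilpotent_map u"
    and hu: "\<forall>x y. b (u x) y = b x (u y)"
    and fl0: "\<forall>i\<le>nu. u ` Fl i \<subseteq> Fl i" using u unfolding WH_def herm_endos_def by auto
  have uW: "u w \<in> W" if "w \<in> W" for w using fl0 Fl_eq[of nu] that unfolding W_def by auto
  have uP: "u y \<in> Pp" if y: "y \<in> Pp" for y
    unfolding Pp_def mem_Collect_eq
  proof (intro allI impI)
    fix i assume i: "i < nu"
    have "b (e i) (u y) = b (u (e i)) y" using hu by simp
    also have "\<dots> = 0" using W_Pp_l[OF uW[OF e_W[OF i]] y] .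
    finally show "b (e i) (u y) = 0" .
  qed
  have uWm: "(u^^m) w \<in> W" if "w \<in> W" for w m
    using that by (induction m) (auto simp: uW)
  have uPm: "(u^^m) y \<in> Pp" if "y \<in> Pp" for y m
    using that by (induction m) (auto simp: uP)
  have u0: "(u^^m) 0 = 0" for m by (induction m) (auto simp: lin_0[OF lin])
  obtain N where N: "(u ^^ N) = (\<lambda>_. 0)" using nil unfolding nilpotent_map_def by auto
  have claim: "\<forall>j. 1 \<le> j \<longrightarrow> N \<le> j + d \<longrightarrow> (\<forall>x\<in>Pp. (u^^j) x \<in> W)" for d
  proof (induction d)
    case 0
    show ?case
    proof (intro allI impI ballI)
      fix j x assume "1 \<le> j" "N \<le> j + 0" "x \<in> Pp"
      then have jj: "j = (j - N) + N" by simp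
      have "(u^^j) x = (u^^((j - N) + N)) x" using jj by metis
      also have "\<dots> = (u^^(j - N)) ((u^^N) x)" by (simp only: funpow_add comp_apply)
      also have "\<dots> = 0" using N u0 by simp
      finally show "(u^^j) x \<in> W" using subspace_W by (simp add: subspace_0)
    qed
  next
    case (Suc d)
    show ?case
    proof (intro allI impI ballI)
      fix j x assume j: "1 \<le> j" "N \<le> j + Suc d" and x: "x \<in> Pp"
      have IH: "(u^^Suc j) z \<in> W" if "z \<in> Pp" for z using Suc.IH j that by auto
      let ?y = "(u^^j) x"
      have yP: "?y \<in> Pp" using uPm x by blast
      have "b ?y ?y = b x ((u^^j) ?y)" using herm_pow[OF hu] by blast
      also have "(u^^j) ?y = (u^^(j - 1)) ((u^^Suc j) x)"
      proof -
        have jj: "j + j = (j - 1) + Suc j" using j by simp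
        have "(u^^j) ?y = (u^^(j + j)) x" by (simp add: funpow_add)
        also have "\<dots> = (u^^((j - 1) + Suc j)) x" by (simp only: jj)
        also have "\<dots> = (u^^(j - 1)) ((u^^Suc j) x)" by (simp only: funpow_add comp_apply)
        finally show ?thesis .
      qed
      also have "b x \<dots> = 0" using W_Pp_r[OF uWm[OF IH[OF x]] x] .
      finally show "?y \<in> W" using maxl' yP by blast
    qed
  qed
  show ?thesis using claim[of N] x by force
qed


lemma b_E_left: "m \<le> nu \<Longrightarrow> w \<in> span (e ` {..<m}) \<Longrightarrow> \<forall>i<m. b (e i) x = 0 \<Longrightarrow> b w x = 0"
proof -
  assume m: "m \<le> nu" and w: "w \<in> span (e ` {..<m})" and x: "\<forall>i<m. b (e i) x = 0"
  have "b w x = b (\<Sum>i<m. scale (b (f i) w) (e i)) x" using span_e_expand[OF m w] by simp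
  also have "\<dots> = 0" unfolding b_sum_l using x by simp
  finally show ?thesis .
qed

lemma Cond_flag: "Cond u \<Longrightarrow> i \<le> nu \<Longrightarrow> u ` span (e ` {..<i}) \<subseteq> span (e ` {..<i})"
proof -
  assume c: "Cond u" and i: "i \<le> nu"
  have lin: "Vector_Spaces.linear scale scale u" using c unfolding Cond_def by simp
  have "u ` (e ` {..<i}) \<subseteq> span (e ` {..<i})"
  proof
    fix y assume "y \<in> u ` (e ` {..<i})"
    then obtain k where k: "k < i" "y = u (e k)" by auto
    then have "y \<in> span (e ` {..<k})" using c i unfolding Cond_def by auto
    then show "y \<in> span (e ` {..<i})" using E_mono[of k i] k by auto
  qed
  then show ?thesis by (rule lin_span[OF lin])
qed

lemma Cond_nil: "Cond u \<Longrightarrow> nilpotent_map u"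
proof -
  assume c: "Cond u"
  have lin: "Vector_Spaces.linear scale scale u" and hu: "\<forall>x y. b (u x) y = b x (u y)"
    and ue: "\<forall>k<nu. u (e k) \<in> span (e ` {..<k})" and uP: "\<forall>x\<in>Pp. u x \<in> W"
    using c unfolding Cond_def by auto
  define S where "S m = (if m \<le> nu then {x. \<forall>i<m. b (e i) x = 0} else span (e ` {..<2*nu+1-m}))" for m
  have step: "u x \<in> S (Suc m)" if m: "m \<le> 2*nu" and x: "x \<in> S m" for m x
  proof (cases "m < nu")
    case True
    have "b (e i) (u x) = 0" if i: "i < Suc m" for i
    proof -
      have "b (e i) (u x) = b (u (e i)) x" using hu by simp
      also have "\<dots> = 0"
      proof (rule b_E_left[of m])
        show "m \<le> nu" using True by simp
        show "u (e i) \<in> span (e ` {..<m})" using ue i True E_mono[of i m] by auto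
        show "\<forall>i<m. b (e i) x = 0" using x True unfolding S_def by simp
      qed
      finally show ?thesis .
    qed
    then show ?thesis using True unfolding S_def by simp
  next
    case False
    show ?thesis
    proof (cases "m = nu")
      case True
      then have "x \<in> Pp" using x unfolding S_def Pp_def by simp
      then have "u x \<in> W" using uP by blast
      moreover have "2*nu+1-Suc m = nu" using True by simp
      ultimately show ?thesis using True unfolding S_def W_def by simp
    next
      case False2: False
      define t where "t = 2*nu+1-m"
      have t: "1 \<le> t" "t \<le> nu" using m False False2 unfolding t_def by auto
      have xs: "x \<in> span (e ` {..<t})" using x False False2 unfolding S_def t_def by simp
      have "u ` (e ` {..<t}) \<subseteq> span (e ` {..<t - 1})"
      proof
        fix y assume "y \<in> u ` (e ` {..<t})"
        then obtain k where k: "k < t" "y = u (e k)" by auto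
        then have "y \<in> span (e ` {..<k})" using ue t by auto
        moreover have "k \<le> t - 1" using k by simp
        ultimately show "y \<in> span (e ` {..<t - 1})" using E_mono[of k "t - 1"] k by blast
      qed
      then have "u ` span (e ` {..<t}) \<subseteq> span (e ` {..<t - 1})" by (rule lin_span[OF lin])
      moreover have "2*nu+1-Suc m = t - 1" unfolding t_def by simp
      ultimately show ?thesis using xs False False2 unfolding S_def by auto
    qed
  qed
  have pw: "(u^^m) x \<in> S m" if "m \<le> 2*nu+1" for m x
    using that
  proof (induction m)
    case 0 then show ?case unfolding S_def by simp
  next
    case (Suc m)
    then show ?case using step[of m "(u^^m) x"] by simp
  qed
  have "(u^^(2*nu+1)) x = 0" for x
  proof -
    have "(u^^(2*nu+1)) x \<in> S (2*nu+1)" using pw[of "2*nu+1" x] by (simp only: order_refl)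
    then show ?thesis unfolding S_def by (cases nu) auto
  qed
  then show ?thesis unfolding nilpotent_map_def by (intro exI[of _ "2*nu+1"]) auto
qed

lemma WH_iff: "u \<in> WH scale b Fl nu \<longleftrightarrow> Cond u"
proof
  assume u: "u \<in> WH scale b Fl nu"
  then show "Cond u" unfolding Cond_def using part_a part_b
    unfolding WH_def herm_endos_def by auto
next
  assume c: "Cond u"
  show "u \<in> WH scale b Fl nu"
    unfolding WH_def herm_endos_def using c Cond_nil Cond_flag Fl_eq
    unfolding Cond_def by auto
qed


definition smul :: "'f \<Rightarrow> ('v \<Rightarrow> 'v) \<Rightarrow> ('v \<Rightarrow> 'v)" where
  "smul k u = (\<lambda>x. scale k (u x))"

lemma smul_0[simp]: "smul 0 u = 0" unfolding smul_def by (rule ext) simp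
lemma smul_1[simp]: "smul 1 u = u" unfolding smul_def by simp

lemma reindex_sum:
  assumes fin: "finite I" and inj: "inj_on \<psi> I" and T: "T \<subseteq> \<psi> ` I"
  shows "(\<Sum>s\<in>I. smul (if \<psi> s \<in> T then c (\<psi> s) else 0) (\<psi> s)) = (\<Sum>v\<in>T. smul (c v) v)"
proof -
  have "(\<Sum>s\<in>I. smul (if \<psi> s \<in> T then c (\<psi> s) else 0) (\<psi> s))
      = (\<Sum>s\<in>I. if \<psi> s \<in> T then smul (c (\<psi> s)) (\<psi> s) else 0)"
    by (intro sum.cong) auto
  also have "\<dots> = (\<Sum>s\<in>{s\<in>I. \<psi> s \<in> T}. smul (c (\<psi> s)) (\<psi> s))"
    using fin by (simp add: sum.inter_filter)
  also have "\<dots> = (\<Sum>v\<in>\<psi> ` {s\<in>I. \<psi> s \<in> T}. smul (c v) v)"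
  proof (rule sum.reindex[symmetric, unfolded comp_def])
    show "inj_on \<psi> {s\<in>I. \<psi> s \<in> T}" using inj by (rule inj_on_subset) blast
  qed
  also have "\<psi> ` {s\<in>I. \<psi> s \<in> T} = T" using T by auto
  finally show ?thesis .
qed

lemma GL2:
  fixes \<psi> :: "'i \<Rightarrow> ('v \<Rightarrow> 'v)" and K :: "'f set"
  assumes fin: "finite I"
    and uniq: "\<And>x x'. (\<forall>s\<in>I. x s \<in> K) \<Longrightarrow> (\<forall>s\<in>I. x' s \<in> K) \<Longrightarrow>
        (\<Sum>s\<in>I. smul (x s) (\<psi> s)) = (\<Sum>s\<in>I. smul (x' s) (\<psi> s)) \<Longrightarrow> (\<forall>s\<in>I. x s = x' s)"
    and S_eq: "S = {(\<Sum>s\<in>I. smul (x s) (\<psi> s)) | x. \<forall>s\<in>I. x s \<in> K}"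
    and K0: "0 \<in> K" and K1: "1 \<in> K"
  shows "K_dim_eq K (\<lambda>k u x. scale k (u x)) S (card I)"
proof -
  have sm: "(\<lambda>k u x. scale k (u x)) = smul" unfolding smul_def by (intro ext) simp
  define \<delta> where "\<delta> s = (\<lambda>t::'i. if t = s then (1::'f) else 0)" for s
  have dK: "\<forall>t\<in>I. \<delta> s t \<in> K" for s unfolding \<delta>_def using K0 K1 by auto
  have dsum: "(\<Sum>t\<in>I. smul (\<delta> s t) (\<psi> t)) = \<psi> s" if "s \<in> I" for s
  proof -
    have "(\<Sum>t\<in>I. smul (\<delta> s t) (\<psi> t)) = (\<Sum>t\<in>I. if t = s then \<psi> t else 0)"
      unfolding \<delta>_def by (intro sum.cong) auto
    also have "\<dots> = \<psi> s" using that by (simp add: sum.delta[OF fin])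
    finally show ?thesis .
  qed
  have inj: "inj_on \<psi> I"
  proof (rule inj_onI)
    fix s s' assume s: "s \<in> I" "s' \<in> I" "\<psi> s = \<psi> s'"
    have "(\<Sum>t\<in>I. smul (\<delta> s t) (\<psi> t)) = (\<Sum>t\<in>I. smul (\<delta> s' t) (\<psi> t))"
      using dsum[OF s(1)] dsum[OF s(2)] s(3) by simp
    then have "\<forall>t\<in>I. \<delta> s t = \<delta> s' t" by (rule uniq[OF dK dK])
    then have "\<delta> s s = \<delta> s' s" using s(1) by blast
    then show "s = s'" unfolding \<delta>_def by (simp split: if_splits)
  qed
  define B where "B = \<psi> ` I"
  have finB: "finite B" unfolding B_def using fin by simp
  have cardB: "card B = card I" unfolding B_def using inj by (simp add: card_image)
  have BS: "B \<subseteq> S"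
  proof
    fix w assume "w \<in> B"
    then obtain s where s: "s \<in> I" "w = \<psi> s" unfolding B_def by auto
    then have "w = (\<Sum>t\<in>I. smul (\<delta> s t) (\<psi> t))" using dsum by simp
    then show "w \<in> S" unfolding S_eq mem_Collect_eq using dK[of s] by (intro exI[of _ "\<delta> s"] conjI)
  qed
  have indep: "K_independent K smul B"
    unfolding K_independent_def
  proof (intro allI impI ballI)
    fix T c v assume H: "finite T \<and> T \<subseteq> B \<and> (\<forall>v\<in>T. c v \<in> K) \<and> (\<Sum>v\<in>T. smul (c v) v) = 0"
      and v: "v \<in> T"
    define x where "x s = (if \<psi> s \<in> T then c (\<psi> s) else 0)" for s
    have xK: "\<forall>s\<in>I. x s \<in> K" unfolding x_def using H K0 by auto
    have TB: "T \<subseteq> \<psi> ` I" using H unfolding B_def by blast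
    have "(\<Sum>s\<in>I. smul (x s) (\<psi> s)) = (\<Sum>v\<in>T. smul (c v) v)"
      unfolding x_def by (rule reindex_sum[OF fin inj TB])
    also have "\<dots> = (\<Sum>s\<in>I. smul (0::'f) (\<psi> s))" using H by simp
    finally have eq: "(\<Sum>s\<in>I. smul (x s) (\<psi> s)) = (\<Sum>s\<in>I. smul (0::'f) (\<psi> s))" .
    have K0': "\<forall>s\<in>I. (0::'f) \<in> K" using K0 by blast
    have "\<forall>s\<in>I. x s = 0" using uniq[OF xK K0' eq] .
    moreover obtain s where "s \<in> I" "v = \<psi> s" using v H unfolding B_def by auto
    ultimately show "c v = 0" using v unfolding x_def by auto
  qed
  have span: "K_span K smul B = S"
  proof
    show "K_span K smul B \<subseteq> S"
    proof
      fix w assume "w \<in> K_span K smul B"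
      then obtain T c where H: "w = (\<Sum>v\<in>T. smul (c v) v)" "finite T" "T \<subseteq> B" "\<forall>v\<in>T. c v \<in> K"
        unfolding K_span_def by auto
      define x where "x s = (if \<psi> s \<in> T then c (\<psi> s) else 0)" for s
      have xK: "\<forall>s\<in>I. x s \<in> K" unfolding x_def using H K0 by auto
      have TB: "T \<subseteq> \<psi> ` I" using H unfolding B_def by blast
      have "(\<Sum>s\<in>I. smul (x s) (\<psi> s)) = w"
        unfolding x_def H(1) by (rule reindex_sum[OF fin inj TB])
      then show "w \<in> S" unfolding S_eq mem_Collect_eq using xK by (intro exI[of _ x] conjI) auto
    qed
  next
    show "S \<subseteq> K_span K smul B"
    proof
      fix w assume "w \<in> S"
      then obtain x where H: "w = (\<Sum>s\<in>I. smul (x s) (\<psi> s))" "\<forall>s\<in>I. x s \<in> K"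
        unfolding S_eq by auto
      define c where "c v = x (inv_into I \<psi> v)" for v
      have "(\<Sum>v\<in>B. smul (c v) v) = (\<Sum>s\<in>I. smul (c (\<psi> s)) (\<psi> s))"
        unfolding B_def using inj by (simp add: sum.reindex)
      also have "\<dots> = w" unfolding H(1) c_def using inj by (intro sum.cong) auto
      finally have "w = (\<Sum>v\<in>B. smul (c v) v)" by simp
      moreover have "\<forall>v\<in>B. c v \<in> K"
      proof
        fix v assume "v \<in> B"
        then have "inv_into I \<psi> v \<in> I" unfolding B_def by (rule inv_into_into)
        then show "c v \<in> K" unfolding c_def using H(2) by blast
      qed
      ultimately show "w \<in> K_span K smul B" unfolding K_span_def mem_Collect_eq using finB
        by (intro exI[of _ B] exI[of _ c] conjI) auto
    qed
  qed
  show ?thesis unfolding K_dim_eq_def sm using finB cardB BS indep span by (intro exI[of _ B]) auto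
qed



lemma decomp_K: "\<exists>x0 x1. st x0 = x0 \<and> st x1 = x1 \<and> z = x0 + x1 * th"
proof -
  have d: "th - st th \<noteq> 0" using th by simp
  define x1 where "x1 = (z - st z) / (th - st th)"
  define x0 where "x0 = z - x1 * th"
  have s1: "st x1 = x1" unfolding x1_def
  proof -
    have "st ((z - st z) / (th - st th)) = (st z - z) / (st th - th)" by simp
    also have "\<dots> = (- (z - st z)) / (- (th - st th))" by simp
    also have "\<dots> = (z - st z) / (th - st th)" by (rule minus_divide_divide)
    finally show "st ((z - st z) / (th - st th)) = (z - st z) / (th - st th)" .
  qed
  have "x1 * (th - st th) = z - st z" unfolding x1_def using d by simp
  then have s0: "st x0 = x0" unfolding x0_def using s1
    by (simp add: algebra_simps)
  have "z = x0 + x1 * th" unfolding x0_def by simp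
  then show ?thesis using s0 s1 by blast
qed

lemma uniq_K: "st x0 = x0 \<Longrightarrow> st x1 = x1 \<Longrightarrow> st y0 = y0 \<Longrightarrow> st y1 = y1 \<Longrightarrow>
   x0 + x1 * th = y0 + y1 * th \<Longrightarrow> x0 = y0 \<and> x1 = y1"
proof -
  assume a: "st x0 = x0" "st x1 = x1" "st y0 = y0" "st y1 = y1" and e: "x0 + x1 * th = y0 + y1 * th"
  have e2: "x0 + x1 * st th = y0 + y1 * st th" using arg_cong[OF e, of st] a by simp
  have h1: "x0 - y0 = (y1 - x1) * th" using e by (simp add: algebra_simps)
  have h2: "x0 - y0 = (y1 - x1) * st th" using e2 by (simp add: algebra_simps)
  have "(y1 - x1) * (th - st th) = 0" using h1 h2 by (simp add: algebra_simps)
  then have "x1 = y1" using th by simp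
  then show ?thesis using e by simp
qed

lemma aA_e: "a \<in> Aset \<Longrightarrow> k < nu \<Longrightarrow> b a (e k) = 0"
  unfolding Aset_def using b_sym[of "e k" a] by (auto simp del: st_b)
lemma aA_f: "a \<in> Aset \<Longrightarrow> k < nu \<Longrightarrow> b a (f k) = 0"
  unfolding Aset_def using b_sym[of "f k" a] by (auto simp del: st_b)
lemma Ae: "a \<in> Aset \<Longrightarrow> k < nu \<Longrightarrow> b (e k) a = 0"
  unfolding Aset_def by auto
lemma Af: "a \<in> Aset \<Longrightarrow> k < nu \<Longrightarrow> b (f k) a = 0"
  unfolding Aset_def by auto

definition Ab where "Ab = (SOME B. B \<subseteq> Aset \<and> independent B \<and> Aset \<subseteq> span B)"
lemma Ab: "Ab \<subseteq> Aset" "independent Ab" "Aset \<subseteq> span Ab" "finite Ab"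
proof -
  have "\<exists>B. B \<subseteq> Aset \<and> independent B \<and> Aset \<subseteq> span B" by (meson basis_exists)
  from someI_ex[OF this] have "Ab \<subseteq> Aset \<and> independent Ab \<and> Aset \<subseteq> span Ab" unfolding Ab_def .
  then show "Ab \<subseteq> Aset" "independent Ab" "Aset \<subseteq> span Ab" by auto
  then show "finite Ab" using finiteI_independent by blast
qed

lemma Ab_expand: "y \<in> Aset \<Longrightarrow> \<exists>g. y = (\<Sum>a\<in>Ab. scale (g a) a)"
  using Ab(3,4) span_finite[OF Ab(4)] by auto

lemma Ab_uniq: "(\<Sum>a\<in>Ab. scale (g a) a) = (\<Sum>a\<in>Ab. scale (h a) a) \<Longrightarrow> a \<in> Ab \<Longrightarrow> g a = h a"
proof -
  assume eq: "(\<Sum>a\<in>Ab. scale (g a) a) = (\<Sum>a\<in>Ab. scale (h a) a)" and a: "a \<in> Ab"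
  have "(\<Sum>a\<in>Ab. scale (g a - h a) a) = 0" using eq
    by (simp add: scale_left_diff_distrib sum_subtractf)
  then show ?thesis using Ab(2) a unfolding independent_explicit by auto
qed

definition D where "D p = (\<lambda>x. scale (b p x) p)"
definition G where "G p q c = (\<lambda>x. scale (c * b q x) p + scale (st c * b p x) q)"

lemma lin_D: "Vector_Spaces.linear scale scale (D p)"
  unfolding Vector_Spaces.linear_iff D_def using vector_space_axioms
  by (simp add: scale_left_distrib)
lemma lin_G: "Vector_Spaces.linear scale scale (G p q c)"
  unfolding Vector_Spaces.linear_iff G_def using vector_space_axioms
  by (simp add: algebra_simps scale_left_distrib)
lemma herm_D: "b (D p x) y = b x (D p y)"
  unfolding D_def by (simp add: mult.commute)
lemma herm_G: "b (G p q c x) y = b x (G p q c y)"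
  unfolding G_def by (simp add: algebra_simps)

lemma Cond_D: "p < nu \<Longrightarrow> Cond (D (e p))"
proof -
  assume p: "p < nu"
  have ek: "D (e p) (e k) \<in> span (e ` {..<k})" if k: "k < nu" for k
    using p k by (simp add: D_def ee span_zero)
  have pp: "D (e p) x \<in> W" if x: "x \<in> Pp" for x
    using p x unfolding Pp_def by (simp add: D_def subspace_0[OF subspace_W])
  show ?thesis unfolding Cond_def using lin_D herm_D ek pp by blast
qed

lemma Cond_Gee: "p < nu \<Longrightarrow> q < nu \<Longrightarrow> Cond (G (e p) (e q) c)"
proof -
  assume p: "p < nu" and q: "q < nu"
  have ek: "G (e p) (e q) c (e k) \<in> span (e ` {..<k})" if k: "k < nu" for k
    using p q k by (simp add: G_def ee span_zero)
  have pp: "G (e p) (e q) c x \<in> W" if x: "x \<in> Pp" for x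
    using p q x unfolding Pp_def by (simp add: G_def subspace_0[OF subspace_W])
  show ?thesis unfolding Cond_def using lin_G herm_G ek pp by blast
qed

lemma Cond_Gea: "p < nu \<Longrightarrow> a \<in> Aset \<Longrightarrow> Cond (G (e p) a c)"
proof -
  assume p: "p < nu" and a: "a \<in> Aset"
  have ek: "G (e p) a c (e k) \<in> span (e ` {..<k})" if k: "k < nu" for k
    using p a k by (simp add: G_def ee aA_e span_zero)
  have pp: "G (e p) a c x \<in> W" if x: "x \<in> Pp" for x
  proof -
    have "G (e p) a c x = scale (c * b a x) (e p)" using p x unfolding Pp_def G_def by simp
    also have "\<dots> \<in> W" using p by (intro subspace_scale[OF subspace_W] e_W)
    finally show ?thesis .
  qed
  show ?thesis unfolding Cond_def using lin_G herm_G ek pp by blast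
qed

lemma Cond_Gef: "q < p \<Longrightarrow> p < nu \<Longrightarrow> Cond (G (e q) (f p) c)"
proof -
  assume qp: "q < p" and p: "p < nu"
  have ek: "G (e q) (f p) c (e k) \<in> span (e ` {..<k})" if k: "k < nu" for k
  proof (cases "p = k")
    case True
    then have "G (e q) (f p) c (e k) = scale c (e q)" unfolding G_def using k qp by (simp add: fe ee)
    also have "\<dots> \<in> span (e ` {..<k})" using True qp by (intro span_scale span_base) auto
    finally show ?thesis .
  next
    case False
    then have "G (e q) (f p) c (e k) = 0" unfolding G_def using k qp p by (simp add: fe ee)
    then show ?thesis by (simp add: span_zero)
  qed
  have pp: "G (e q) (f p) c x \<in> W" if x: "x \<in> Pp" for x
  proof -
    have "G (e q) (f p) c x = scale (c * b (f p) x) (e q)" unfolding G_def using x qp p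
      unfolding Pp_def by simp
    also have "\<dots> \<in> W" using qp p by (intro subspace_scale[OF subspace_W] e_W) auto
    finally show ?thesis .
  qed
  show ?thesis unfolding Cond_def using lin_G herm_G ek pp by blast
qed


definition I1 :: "(nat \<times> nat \<times> bool) set" where "I1 = {(i,j,r). i < nu \<and> j < nu \<and> (i \<noteq> j \<or> \<not> r)}"
definition I2 :: "(nat \<times> 'v \<times> bool) set" where "I2 = {(i,a,r). i < nu \<and> a \<in> Ab}"
definition Ix where "Ix = Inl ` I1 \<union> Inr ` I2"
definition cc :: "bool \<Rightarrow> 'f" where "cc r = (if r then th else 1)"
definition psi :: "(nat \<times> nat \<times> bool) + (nat \<times> 'v \<times> bool) \<Rightarrow> 'v \<Rightarrow> 'v" where
  "psi s = (case s of Inl (p,q,r) \<Rightarrow> (if p = q then D (e p) else if p < q then G (e p) (e q) (cc r)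
        else G (e q) (f p) (cc r)) | Inr (p,a,r) \<Rightarrow> G (e p) a (cc r))"

lemma psi_eq: "psi (Inl (p,p,r)) = D (e p)" unfolding psi_def by simp
lemma psi_lt: "p < q \<Longrightarrow> psi (Inl (p,q,r)) = G (e p) (e q) (cc r)" unfolding psi_def by simp
lemma psi_gt: "q < p \<Longrightarrow> psi (Inl (p,q,r)) = G (e q) (f p) (cc r)" unfolding psi_def by simp
lemma psi_r: "psi (Inr (p,a,r)) = G (e p) a (cc r)" unfolding psi_def by simp

lemma finite_I1: "finite I1"
proof -
  have "I1 \<subseteq> {..<nu} \<times> {..<nu} \<times> UNIV" unfolding I1_def by auto
  then show ?thesis by (rule finite_subset) auto
qed
lemma finite_I2: "finite I2"
proof -
  have "I2 = {..<nu} \<times> Ab \<times> UNIV" unfolding I2_def by auto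
  then show ?thesis using Ab(4) by simp
qed
lemma finite_Ix: "finite Ix" unfolding Ix_def using finite_I1 finite_I2 by simp

lemma Ix_cases:
  assumes "s \<in> Ix"
  obtains (eq) p r where "s = Inl (p,p,r)" "p < nu" "\<not> r"
    | (lt) p q r where "s = Inl (p,q,r)" "p < q" "q < nu"
    | (gt) p q r where "s = Inl (p,q,r)" "q < p" "p < nu"
    | (rr) p a r where "s = Inr (p,a,r)" "p < nu" "a \<in> Ab"
proof -
  consider (l) p q r where "s = Inl (p,q,r)" "(p,q,r) \<in> I1" | (r) p a r where "s = Inr (p,a,r)" "(p,a,r) \<in> I2"
    using assms unfolding Ix_def by auto
  then show ?thesis
  proof cases
    case l
    then show ?thesis using that unfolding I1_def by (cases p q rule: linorder_cases) auto
  next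
    case r
    then show ?thesis using that unfolding I2_def by auto
  qed
qed

lemma sum_supp1: "finite A \<Longrightarrow> a \<in> A \<Longrightarrow> (\<And>s. s \<in> A \<Longrightarrow> s \<noteq> a \<Longrightarrow> g s = 0) \<Longrightarrow> sum g A = g a"
proof -
  assume f: "finite A" and a: "a \<in> A" and z: "\<And>s. s \<in> A \<Longrightarrow> s \<noteq> a \<Longrightarrow> g s = 0"
  have "sum g A = sum g {a}" by (rule sum.mono_neutral_right) (use f a z in auto)
  then show ?thesis by simp
qed
lemma sum_supp2: "finite A \<Longrightarrow> a \<in> A \<Longrightarrow> c \<in> A \<Longrightarrow> a \<noteq> c \<Longrightarrow>
   (\<And>s. s \<in> A \<Longrightarrow> s \<noteq> a \<Longrightarrow> s \<noteq> c \<Longrightarrow> g s = 0) \<Longrightarrow> sum g A = g a + g c"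
proof -
  assume f: "finite A" and a: "a \<in> A" "c \<in> A" "a \<noteq> c" and z: "\<And>s. s \<in> A \<Longrightarrow> s \<noteq> a \<Longrightarrow> s \<noteq> c \<Longrightarrow> g s = 0"
  have "sum g A = sum g {a, c}" by (rule sum.mono_neutral_right) (use f a z in auto)
  then show ?thesis using a by simp
qed

definition vv where "vv x = (\<Sum>s\<in>Ix. smul (x s) (psi s))"
lemma vv_apply: "vv x y = (\<Sum>s\<in>Ix. scale (x s) (psi s y))"
  unfolding vv_def sum_fun_apply smul_def by simp

lemma K1: "i < nu \<Longrightarrow> b (f i) (vv x (f i)) = x (Inl (i,i,False))"
proof -
  assume i: "i < nu"
  have mem: "Inl (i,i,False) \<in> Ix" unfolding Ix_def I1_def using i by auto
  have "b (f i) (vv x (f i)) = (\<Sum>s\<in>Ix. x s * b (f i) (psi s (f i)))"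
    unfolding vv_apply b_sum_r by simp
  also have "\<dots> = x (Inl (i,i,False)) * b (f i) (psi (Inl (i,i,False)) (f i))"
  proof (rule sum_supp1[OF finite_Ix mem])
    fix s assume s: "s \<in> Ix" "s \<noteq> Inl (i, i, False)"
    from s(1) show "x s * b (f i) (psi s (f i)) = 0"
    proof (cases rule: Ix_cases)
      case (eq p r) then show ?thesis using s i by (auto simp: psi_eq D_def fe)
    next
      case (lt p q r) then show ?thesis using s i by (auto simp: psi_lt G_def fe ff ee ef)
    next
      case (gt p q r) then show ?thesis using s i by (auto simp: psi_gt G_def fe ff ee ef)
    next
      case (rr p a r) then show ?thesis using s i Ab(1) by (auto simp: psi_r G_def fe ff ee ef Af aA_f)
    qed
  qed
  also have "\<dots> = x (Inl (i,i,False))" using i by (simp add: psi_eq D_def fe ef)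
  finally show ?thesis .
qed

lemma K2: "i < j \<Longrightarrow> j < nu \<Longrightarrow> b (f i) (vv x (f j)) = x (Inl (i,j,False)) + x (Inl (i,j,True)) * th"
proof -
  assume ij: "i < j" and j: "j < nu"
  have mem: "Inl (i,j,False) \<in> Ix" "Inl (i,j,True) \<in> Ix" unfolding Ix_def I1_def using ij j by auto
  have "b (f i) (vv x (f j)) = (\<Sum>s\<in>Ix. x s * b (f i) (psi s (f j)))"
    unfolding vv_apply b_sum_r by simp
  also have "\<dots> = x (Inl (i,j,False)) * b (f i) (psi (Inl (i,j,False)) (f j))
      + x (Inl (i,j,True)) * b (f i) (psi (Inl (i,j,True)) (f j))"
  proof (rule sum_supp2[OF finite_Ix mem])
    fix s assume s: "s \<in> Ix" "s \<noteq> Inl (i, j, False)" "s \<noteq> Inl (i, j, True)"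
    from s(1) show "x s * b (f i) (psi s (f j)) = 0"
    proof (cases rule: Ix_cases)
      case (eq p r) then show ?thesis using s ij j by (auto simp: psi_eq D_def fe ef)
    next
      case (lt p q r)
      then show ?thesis using s ij j by (cases r) (auto simp: psi_lt G_def fe ff ee ef)
    next
      case (gt p q r) then show ?thesis using s ij j by (auto simp: psi_gt G_def fe ff ee ef)
    next
      case (rr p a r) then show ?thesis using s ij j Ab(1) by (auto simp: psi_r G_def fe ff ee ef Af aA_f)
    qed
  qed simp
  also have "\<dots> = x (Inl (i,j,False)) + x (Inl (i,j,True)) * th"
    using ij j by (simp add: psi_lt G_def fe ef cc_def)
  finally show ?thesis .
qed

lemma K3: "j < i \<Longrightarrow> i < nu \<Longrightarrow> b (f j) (vv x (e i)) = x (Inl (i,j,False)) + x (Inl (i,j,True)) * th"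
proof -
  assume ij: "j < i" and i: "i < nu"
  have mem: "Inl (i,j,False) \<in> Ix" "Inl (i,j,True) \<in> Ix" unfolding Ix_def I1_def using ij i by auto
  have "b (f j) (vv x (e i)) = (\<Sum>s\<in>Ix. x s * b (f j) (psi s (e i)))"
    unfolding vv_apply b_sum_r by simp
  also have "\<dots> = x (Inl (i,j,False)) * b (f j) (psi (Inl (i,j,False)) (e i))
      + x (Inl (i,j,True)) * b (f j) (psi (Inl (i,j,True)) (e i))"
  proof (rule sum_supp2[OF finite_Ix mem])
    fix s assume s: "s \<in> Ix" "s \<noteq> Inl (i, j, False)" "s \<noteq> Inl (i, j, True)"
    from s(1) show "x s * b (f j) (psi s (e i)) = 0"
    proof (cases rule: Ix_cases)
      case (eq p r) then show ?thesis using s ij i by (auto simp: psi_eq D_def ee)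
    next
      case (lt p q r) then show ?thesis using s ij i by (auto simp: psi_lt G_def fe ff ee ef)
    next
      case (gt p q r)
      then show ?thesis using s ij i by (cases r) (auto simp: psi_gt G_def fe ff ee ef)
    next
      case (rr p a r) then show ?thesis using s ij i Ab(1) by (auto simp: psi_r G_def fe ff ee ef aA_e)
    qed
  qed simp
  also have "\<dots> = x (Inl (i,j,False)) + x (Inl (i,j,True)) * th"
    using ij i by (simp add: psi_gt G_def fe ef ee cc_def)
  finally show ?thesis .
qed


lemma lin_pr: "Vector_Spaces.linear scale scale pr"
  unfolding Vector_Spaces.linear_iff pr_def using vector_space_axioms
  by (simp add: algebra_simps sum.distrib scale_left_distrib scale_sum_right)

lemma pr_e: "q < nu \<Longrightarrow> pr (e q) = 0" using pr_W e_W by blast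
lemma pr_f: "p < nu \<Longrightarrow> pr (f p) = 0"
proof -
  assume p: "p < nu"
  have "(\<Sum>i<nu. scale (b (f i) (f p)) (e i)) = 0" using p by (intro sum.neutral) (auto simp: ff)
  moreover have "(\<Sum>i<nu. scale (b (e i) (f p)) (f i)) = (\<Sum>i<nu. if i = p then f i else 0)"
    using p by (intro sum.cong) (auto simp: ef)
  ultimately show ?thesis unfolding pr_def using p by simp
qed
lemma pr_Aid: "a \<in> Aset \<Longrightarrow> pr a = a"
  unfolding pr_def Aset_def by simp

lemma K4: "k < nu \<Longrightarrow> pr (vv x (f k)) = (\<Sum>a\<in>Ab. scale (x (Inr (k,a,False)) + x (Inr (k,a,True)) * st th) a)"
proof -
  assume k: "k < nu"
  define h where "h s = scale (x s) (pr (psi s (f k)))" for s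
  have "pr (vv x (f k)) = (\<Sum>s\<in>Ix. h s)"
    unfolding vv_apply h_def by (simp add: lin_sum[OF lin_pr] lin_scale[OF lin_pr])
  define J :: "((nat \<times> nat \<times> bool) + (nat \<times> 'v \<times> bool)) set"
    where "J = (\<lambda>(a,r). Inr (k,a,r)) ` (Ab \<times> (UNIV::bool set))"
  have JI: "J \<subseteq> Ix" unfolding J_def Ix_def I2_def using k by auto
  have hz: "h s = 0" if s: "s \<in> Ix - J" for s
  proof -
    from s have sI: "s \<in> Ix" by simp
    from sI show ?thesis
    proof (cases rule: Ix_cases)
      case (eq p r) then show ?thesis unfolding h_def using k
        by (simp add: psi_eq D_def lin_scale[OF lin_pr] pr_e)
    next
      case (lt p q r) then show ?thesis unfolding h_def using k
        by (simp add: psi_lt G_def lin_add[OF lin_pr] lin_scale[OF lin_pr] pr_e)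
    next
      case (gt p q r) then show ?thesis unfolding h_def using k
        by (simp add: psi_gt G_def lin_add[OF lin_pr] lin_scale[OF lin_pr] pr_e pr_f)
    next
      case (rr p a r)
      then have "p \<noteq> k" using s unfolding J_def by auto
      then show ?thesis unfolding h_def using k rr Ab(1)
        by (auto simp: psi_r G_def lin_add[OF lin_pr] lin_scale[OF lin_pr] pr_e aA_f ef)
    qed
  qed
  have "(\<Sum>s\<in>Ix. h s) = (\<Sum>s\<in>J. h s)"
    by (rule sum.mono_neutral_right[OF finite_Ix JI]) (use hz in blast)
  also have "\<dots> = (\<Sum>t\<in>Ab \<times> (UNIV::bool set). h (Inr (k, fst t, snd t)))"
    unfolding J_def by (subst sum.reindex) (auto simp: inj_on_def case_prod_beta)
  also have "\<dots> = (\<Sum>a\<in>Ab. \<Sum>r\<in>(UNIV::bool set). h (Inr (k, a, r)))"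
    by (simp add: sum.cartesian_product)
  also have "\<dots> = (\<Sum>a\<in>Ab. scale (x (Inr (k,a,False)) + x (Inr (k,a,True)) * st th) a)"
  proof (rule sum.cong[OF refl])
    fix a assume a: "a \<in> Ab"
    then have aA: "a \<in> Aset" using Ab(1) by blast
    have hr: "h (Inr (k, a, r)) = scale (x (Inr (k,a,r)) * st (cc r)) a" for r
      unfolding h_def using k aA
      by (simp add: psi_r G_def lin_add[OF lin_pr] lin_scale[OF lin_pr] pr_e aA_f ef pr_Aid)
    show "(\<Sum>r\<in>(UNIV::bool set). h (Inr (k, a, r))) = scale (x (Inr (k,a,False)) + x (Inr (k,a,True)) * st th) a"
      unfolding hr UNIV_bool by (simp add: cc_def scale_left_distrib)
  qed
  finally show ?thesis using \<open>pr (vv x (f k)) = (\<Sum>s\<in>Ix. h s)\<close> by simp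
qed


lemma Cond_0: "Cond (\<lambda>_. 0)"
  unfolding Cond_def Vector_Spaces.linear_iff using vector_space_axioms
  by (simp add: span_zero subspace_0[OF subspace_W])

lemma Cond_add: "Cond u \<Longrightarrow> Cond v \<Longrightarrow> Cond (\<lambda>x. u x + v x)"
proof -
  assume u: "Cond u" and v: "Cond v"
  have lin: "Vector_Spaces.linear scale scale (\<lambda>x. u x + v x)"
    using u v unfolding Cond_def Vector_Spaces.linear_iff by (simp add: algebra_simps scale_right_distrib)
  show ?thesis unfolding Cond_def
  proof (intro conjI allI impI ballI lin)
    fix x y show "b (u x + v x) y = b x (u y + v y)" using u v unfolding Cond_def by simp
  next
    fix k assume "k < nu" then show "u (e k) + v (e k) \<in> span (e ` {..<k})"
      using u v unfolding Cond_def by (simp add: span_add)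
  next
    fix x assume "x \<in> Pp" then show "u x + v x \<in> W"
      using u v subspace_W unfolding Cond_def by (simp add: subspace_add)
  qed
qed

lemma Cond_smul: "Cond u \<Longrightarrow> st k = k \<Longrightarrow> Cond (\<lambda>x. scale k (u x))"
proof -
  assume u: "Cond u" and k: "st k = k"
  have lin: "Vector_Spaces.linear scale scale (\<lambda>x. scale k (u x))"
    using u unfolding Cond_def Vector_Spaces.linear_iff by (simp add: scale_right_distrib mult.commute)
  show ?thesis unfolding Cond_def
  proof (intro conjI allI impI ballI lin)
    fix x y show "b (scale k (u x)) y = b x (scale k (u y))" using u k unfolding Cond_def by simp
  next
    fix j assume "j < nu" then show "scale k (u (e j)) \<in> span (e ` {..<j})"
      using u unfolding Cond_def by (simp add: span_scale)
  next
    fix x assume "x \<in> Pp" then show "scale k (u x) \<in> W"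
      using u subspace_W unfolding Cond_def by (simp add: subspace_scale)
  qed
qed

lemma Cond_neg: "Cond u \<Longrightarrow> Cond (\<lambda>x. - u x)"
proof -
  assume u: "Cond u"
  have "Cond (\<lambda>x. scale (-1) (u x))" by (rule Cond_smul[OF u]) simp
  then show ?thesis by simp
qed

lemma Cond_diff: "Cond u \<Longrightarrow> Cond v \<Longrightarrow> Cond (\<lambda>x. u x - v x)"
  using Cond_add[OF _ Cond_neg, of u v] by simp

lemma Cond_sum: "finite S \<Longrightarrow> (\<And>s. s \<in> S \<Longrightarrow> Cond (g s)) \<Longrightarrow> Cond (\<Sum>s\<in>S. g s)"
proof (induction S rule: finite_induct)
  case empty
  have "(\<Sum>s\<in>{}. g s) = (\<lambda>_. 0)" by (rule ext) simp
  then show ?case using Cond_0 by simp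
next
  case (insert s S)
  have "(\<Sum>s\<in>insert s S. g s) = (\<lambda>x. g s x + (\<Sum>s\<in>S. g s) x)"
    using insert.hyps by (simp add: fun_eq_iff)
  then show ?case using Cond_add insert by simp
qed

lemma Cond_psi: assumes "s \<in> Ix" shows "Cond (psi s)"
  using assms
proof (cases rule: Ix_cases)
  case (eq p r) then show ?thesis by (simp add: psi_eq Cond_D)
next
  case (lt p q r) then show ?thesis by (simp add: psi_lt Cond_Gee)
next
  case (gt p q r) then show ?thesis by (simp add: psi_gt Cond_Gef)
next
  case (rr p a r) then show ?thesis using Ab(1) by (auto simp: psi_r intro: Cond_Gea)
qed

lemma Cond_vv: "\<forall>s\<in>Ix. st (x s) = x s \<Longrightarrow> Cond (vv x)"
  unfolding vv_def smul_def
  by (rule Cond_sum[OF finite_Ix]) (auto intro: Cond_smul Cond_psi)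

lemma b_pr_A: "a \<in> Aset \<Longrightarrow> b y a = b (pr y) a"
proof -
  assume a: "a \<in> Aset"
  have "b y a = b ((\<Sum>i<nu. scale (b (f i) y) (e i)) + (\<Sum>i<nu. scale (b (e i) y) (f i)) + pr y) a"
    using decomp[of y] by simp
  also have "\<dots> = b (pr y) a" using a unfolding b_add_l b_sum_l by (simp add: Ae Af)
  finally show ?thesis .
qed

lemma Zlem:
  assumes d: "Cond d"
    and c1: "\<forall>i<nu. \<forall>j<nu. b (f i) (d (f j)) = 0"
    and c2: "\<forall>i<nu. \<forall>j<nu. b (f j) (d (e i)) = 0"
    and c3: "\<forall>k<nu. pr (d (f k)) = 0"
  shows "d y = 0"
proof -
  have lin: "Vector_Spaces.linear scale scale d" and hd: "\<forall>x y. b (d x) y = b x (d y)"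
    and de0: "\<forall>k<nu. d (e k) \<in> span (e ` {..<k})" and dP: "\<forall>x\<in>Pp. d x \<in> W"
    using d unfolding Cond_def by auto
  have de: "d (e k) = 0" if k: "k < nu" for k
  proof -
    have "d (e k) \<in> W" using de0 k E_mono[of k nu] unfolding W_def by auto
    then have "d (e k) = (\<Sum>i<nu. scale (b (f i) (d (e k))) (e i))" using W_expand by blast
    also have "\<dots> = 0" using c2 k by simp
    finally show ?thesis .
  qed
  have da: "d a = 0" if a: "a \<in> Aset" for a
  proof -
    have "d a \<in> W" using dP a A_Pp by blast
    then have "d a = (\<Sum>i<nu. scale (b (f i) (d a)) (e i))" using W_expand by blast
    also have "\<dots> = 0"
    proof (intro sum.neutral ballI)
      fix i assume "i \<in> {..<nu}"
      then have i: "i < nu" by simp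
      have "b (f i) (d a) = b (d (f i)) a" using hd by simp
      also have "\<dots> = b (pr (d (f i))) a" using b_pr_A[OF a] .
      also have "\<dots> = 0" using c3 i by simp
      finally show "scale (b (f i) (d a)) (e i) = 0" by simp
    qed
    finally show ?thesis .
  qed
  have df: "d (f k) = 0" if k: "k < nu" for k
  proof -
    have z: "b (e i) (d (f k)) = 0" if i: "i < nu" for i
    proof -
      have "b (e i) (d (f k)) = b (d (e i)) (f k)" using hd by simp
      then show ?thesis using de i by simp
    qed
    have "d (f k) = (\<Sum>i<nu. scale (b (f i) (d (f k))) (e i)) + (\<Sum>i<nu. scale (b (e i) (d (f k))) (f i)) + pr (d (f k))"
      by (rule decomp)
    also have "\<dots> = 0" using c1 c3 z k by simp
    finally show ?thesis .
  qed
  have "d y = d ((\<Sum>i<nu. scale (b (f i) y) (e i)) + (\<Sum>i<nu. scale (b (e i) y) (f i)) + pr y)"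
    using decomp[of y] by simp
  also have "\<dots> = 0"
    using de df da[OF pr_A[of y]] by (simp add: lin_add[OF lin] lin_sum[OF lin] lin_scale[OF lin])
  finally show ?thesis .
qed


definition RI where "RI z = (SOME p. st (fst p) = fst p \<and> st (snd p) = snd p \<and> z = fst p + snd p * th)"
lemma RI: "st (fst (RI z)) = fst (RI z) \<and> st (snd (RI z)) = snd (RI z) \<and> z = fst (RI z) + snd (RI z) * th"
proof -
  obtain x0 x1 where "st x0 = x0 \<and> st x1 = x1 \<and> z = x0 + x1 * th" using decomp_K by blast
  then have "\<exists>p. st (fst p) = fst p \<and> st (snd p) = snd p \<and> z = fst p + snd p * th"
    by (intro exI[of _ "(x0, x1)"]) simp
  from someI_ex[OF this] show ?thesis unfolding RI_def .
qed
definition comp where "comp r z = (if r then snd (RI z) else fst (RI z))"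
lemma comp_K: "st (comp r z) = comp r z" unfolding comp_def using RI by auto
lemma comp_sum: "comp False z + comp True z * th = z" unfolding comp_def using RI by auto

lemma vv_WH: "\<forall>s\<in>Ix. st (x s) = x s \<Longrightarrow> vv x \<in> WH scale b Fl nu"
  using WH_iff Cond_vv by blast

lemma WH_vv:
  assumes u: "u \<in> WH scale b Fl nu"
  shows "\<exists>x. (\<forall>s\<in>Ix. st (x s) = x s) \<and> u = vv x"
proof -
  have c: "Cond u" using u WH_iff by blast
  then have hu: "\<forall>x y. b (u x) y = b x (u y)" unfolding Cond_def by blast
  have ex: "\<exists>g. pr (u (f p)) = (\<Sum>a\<in>Ab. scale (g a) a)" for p
    using Ab_expand[OF pr_A] by blast
  define gam where "gam p = (SOME g. pr (u (f p)) = (\<Sum>a\<in>Ab. scale (g a) a))" for p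
  have gam: "pr (u (f p)) = (\<Sum>a\<in>Ab. scale (gam p a) a)" for p
    unfolding gam_def by (rule someI_ex[OF ex])
  define x where "x s = (case s of Inl (p,q,r) \<Rightarrow> (if p = q then b (f p) (u (f p))
      else if p < q then comp r (b (f p) (u (f q))) else comp r (b (f q) (u (e p))))
     | Inr (p,a,r) \<Rightarrow> comp r (st (gam p a)))" for s
  have xK: "\<forall>s\<in>Ix. st (x s) = x s"
  proof
    fix s assume "s \<in> Ix"
    then show "st (x s) = x s"
    proof (cases rule: Ix_cases)
      case (eq p r)
      have "st (b (f p) (u (f p))) = b (f p) (u (f p))" using hu by simp
      then show ?thesis using eq unfolding x_def by simp
    qed (auto simp: x_def comp_K)
  qed
  define d where "d = (\<lambda>y. u y - vv x y)"
  have cd: "Cond d" unfolding d_def by (rule Cond_diff[OF c Cond_vv[OF xK]])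
  then have hd: "\<forall>x y. b (d x) y = b x (d y)" and de: "\<forall>k<nu. d (e k) \<in> span (e ` {..<k})"
    unfolding Cond_def by blast+
  have c1': "b (f i) (d (f j)) = 0" if ij: "i \<le> j" "j < nu" for i j
  proof (cases "i = j")
    case True
    then show ?thesis unfolding d_def using K1[of j x] ij by (simp add: x_def)
  next
    case False
    then have "i < j" using ij by simp
    then show ?thesis unfolding d_def using K2[of i j x] ij by (simp add: x_def comp_sum)
  qed
  have c1: "\<forall>i<nu. \<forall>j<nu. b (f i) (d (f j)) = 0"
  proof (intro allI impI)
    fix i j assume i: "i < nu" and j: "j < nu"
    show "b (f i) (d (f j)) = 0"
    proof (cases "i \<le> j")
      case True then show ?thesis using c1' j by blast
    next
      case False
      have "b (f i) (d (f j)) = b (d (f i)) (f j)" using hd by simp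
      also have "\<dots> = st (b (f j) (d (f i)))" by (rule b_sym)
      also have "b (f j) (d (f i)) = 0" using c1'[of j i] False i by simp
      finally show ?thesis by simp
    qed
  qed
  have c2: "\<forall>i<nu. \<forall>j<nu. b (f j) (d (e i)) = 0"
  proof (intro allI impI)
    fix i j assume i: "i < nu" and j: "j < nu"
    show "b (f j) (d (e i)) = 0"
    proof (cases "j < i")
      case True
      then show ?thesis unfolding d_def using K3[of j i x] i by (simp add: x_def comp_sum)
    next
      case False
      have "d (e i) \<in> span (e ` {..<i})" using de i by blast
      then show ?thesis using span_e_expand[of i "d (e i)"] i j False by auto
    qed
  qed
  have c3: "\<forall>k<nu. pr (d (f k)) = 0"
  proof (intro allI impI)
    fix k assume k: "k < nu"
    have co: "x (Inr (k,a,False)) + x (Inr (k,a,True)) * st th = gam k a" for a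
    proof -
      have "x (Inr (k,a,False)) + x (Inr (k,a,True)) * st th
          = st (comp False (st (gam k a)) + comp True (st (gam k a)) * th)"
        unfolding x_def by (simp add: comp_K)
      also have "\<dots> = gam k a" unfolding comp_sum by simp
      finally show ?thesis .
    qed
    have "pr (d (f k)) = pr (u (f k)) - pr (vv x (f k))" unfolding d_def by (rule lin_diff[OF lin_pr])
    also have "\<dots> = 0" unfolding K4[OF k] gam co by simp
    finally show "pr (d (f k)) = 0" .
  qed
  have "d y = 0" for y by (rule Zlem[OF cd c1 c2 c3])
  then have "u = vv x" unfolding d_def by (auto simp: fun_eq_iff)
  then show ?thesis using xK by blast
qed

lemma vv_uniq:
  assumes xK: "\<forall>s\<in>Ix. st (x s) = x s" and yK: "\<forall>s\<in>Ix. st (y s) = y s" and veq: "vv x = vv y"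
  shows "\<forall>s\<in>Ix. x s = y s"
proof
  fix s assume s: "s \<in> Ix"
  then show "x s = y s"
  proof (cases rule: Ix_cases)
    case (eq p r)
    then show ?thesis using K1[of p x] K1[of p y] veq by simp
  next
    case (lt p q r)
    have m: "Inl (p,q,False) \<in> Ix" "Inl (p,q,True) \<in> Ix" unfolding Ix_def I1_def using lt by auto
    have "x (Inl (p,q,False)) + x (Inl (p,q,True)) * th = y (Inl (p,q,False)) + y (Inl (p,q,True)) * th"
      using K2[of p q x] K2[of p q y] lt veq by simp
    then have "x (Inl (p,q,False)) = y (Inl (p,q,False)) \<and> x (Inl (p,q,True)) = y (Inl (p,q,True))"
      using uniq_K xK yK m by blast
    then show ?thesis using lt by (cases r) auto
  next
    case (gt p q r)
    have m: "Inl (p,q,False) \<in> Ix" "Inl (p,q,True) \<in> Ix" unfolding Ix_def I1_def using gt by auto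
    have "x (Inl (p,q,False)) + x (Inl (p,q,True)) * th = y (Inl (p,q,False)) + y (Inl (p,q,True)) * th"
      using K3[of q p x] K3[of q p y] gt veq by simp
    then have "x (Inl (p,q,False)) = y (Inl (p,q,False)) \<and> x (Inl (p,q,True)) = y (Inl (p,q,True))"
      using uniq_K xK yK m by blast
    then show ?thesis using gt by (cases r) auto
  next
    case (rr p a r)
    have m: "Inr (p,a,False) \<in> Ix" "Inr (p,a,True) \<in> Ix" unfolding Ix_def I2_def using rr by auto
    have "(\<Sum>a\<in>Ab. scale (x (Inr (p,a,False)) + x (Inr (p,a,True)) * st th) a)
        = (\<Sum>a\<in>Ab. scale (y (Inr (p,a,False)) + y (Inr (p,a,True)) * st th) a)"
      using K4[of p x] K4[of p y] rr veq by simp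
    from Ab_uniq[OF this rr(3)]
    have "st (x (Inr (p,a,False)) + x (Inr (p,a,True)) * th) = st (y (Inr (p,a,False)) + y (Inr (p,a,True)) * th)"
      using xK yK m by simp
    then have "x (Inr (p,a,False)) + x (Inr (p,a,True)) * th = y (Inr (p,a,False)) + y (Inr (p,a,True)) * th"
      by (simp only: st_eq_iff)
    then have "x (Inr (p,a,False)) = y (Inr (p,a,False)) \<and> x (Inr (p,a,True)) = y (Inr (p,a,True))"
      using uniq_K xK yK m by blast
    then show ?thesis using rr by (cases r) auto
  qed
qed


lemma inj_e: "inj_on e {..<nu}"
proof (rule inj_onI)
  fix i j assume "i \<in> {..<nu}" "j \<in> {..<nu}" "e i = e j"
  then show "i = j" using fe[of i i] fe[of i j] by (auto split: if_splits)
qed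
lemma inj_f: "inj_on f {..<nu}"
proof (rule inj_onI)
  fix i j assume "i \<in> {..<nu}" "j \<in> {..<nu}" "f i = f j"
  then show "i = j" using ef[of i i] ef[of i j] by (auto split: if_splits)
qed

lemma dimV: "dim (UNIV :: 'v set) = 2 * nu + card Ab"
proof -
  define E0 where "E0 = e ` {..<nu}"
  define F0 where "F0 = f ` {..<nu}"
  have d1: "E0 \<inter> F0 = {}"
  proof (rule ccontr)
    assume "E0 \<inter> F0 \<noteq> {}"
    then obtain i j where ij: "i < nu" "j < nu" "e i = f j" unfolding E0_def F0_def by auto
    then show False using ee[of j i] ef[of j j] by simp
  qed
  have d2: "(E0 \<union> F0) \<inter> Ab = {}"
  proof (rule ccontr)
    assume "(E0 \<union> F0) \<inter> Ab \<noteq> {}"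
    then obtain v where v: "v \<in> E0 \<union> F0" "v \<in> Aset" using Ab(1) by auto
    then show False unfolding E0_def F0_def using fe ef Af Ae by fastforce
  qed
  have fin: "finite E0" "finite F0" "finite Ab" unfolding E0_def F0_def using Ab(4) by auto
  have cE: "card E0 = nu" unfolding E0_def using inj_e by (simp add: card_image)
  have cF: "card F0 = nu" unfolding F0_def using inj_f by (simp add: card_image)
  define S0 where "S0 = E0 \<union> F0 \<union> Ab"
  have cS: "card S0 = 2 * nu + card Ab" unfolding S0_def using fin d1 d2 cE cF
    by (simp add: card_Un_disjoint)
  have sp: "UNIV \<subseteq> span S0"
  proof
    fix x :: 'v
    have "x = (\<Sum>i<nu. scale (b (f i) x) (e i)) + (\<Sum>i<nu. scale (b (e i) x) (f i)) + pr x" by (rule decomp)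
    also have "\<dots> \<in> span S0"
    proof (intro span_add span_sum span_scale)
      fix i assume "i \<in> {..<nu}"
      then show "e i \<in> span S0" "f i \<in> span S0" unfolding S0_def E0_def F0_def by (auto intro: span_base)
    next
      have "pr x \<in> span Ab" using pr_A Ab(3) by blast
      then show "pr x \<in> span S0" using span_mono[of Ab S0] unfolding S0_def by auto
    qed
    finally show "x \<in> span S0" .
  qed
  have ind: "independent S0"
    unfolding independent_explicit
  proof (intro conjI allI impI ballI)
    show "finite S0" unfolding S0_def using fin by simp
    fix c v assume z: "(\<Sum>v\<in>S0. scale (c v) v) = 0" and v: "v \<in> S0"
    have "(\<Sum>v\<in>S0. scale (c v) v) = (\<Sum>v\<in>E0. scale (c v) v) + (\<Sum>v\<in>F0. scale (c v) v) + (\<Sum>v\<in>Ab. scale (c v) v)"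
      unfolding S0_def using fin d1 d2 by (simp add: sum.union_disjoint)
    also have "(\<Sum>v\<in>E0. scale (c v) v) = (\<Sum>i<nu. scale (c (e i)) (e i))"
      unfolding E0_def using inj_e by (simp add: sum.reindex)
    also have "(\<Sum>v\<in>F0. scale (c v) v) = (\<Sum>i<nu. scale (c (f i)) (f i))"
      unfolding F0_def using inj_f by (simp add: sum.reindex)
    finally have z2: "(\<Sum>i<nu. scale (c (e i)) (e i)) + (\<Sum>i<nu. scale (c (f i)) (f i)) + (\<Sum>v\<in>Ab. scale (c v) v) = 0"
      using z by simp
    have bA: "b w (\<Sum>v\<in>Ab. scale (c v) v) = 0" if "w \<in> E0 \<union> F0" for w
      unfolding b_sum_r using that Ab(1) unfolding E0_def F0_def by (auto intro!: sum.neutral simp: Ae Af)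
    have ce: "c (e j) = 0" if j: "j < nu" for j
    proof -
      have "b (f j) (\<Sum>v\<in>Ab. scale (c v) v) = 0" using bA[of "f j"] j unfolding F0_def by auto
      then show ?thesis using arg_cong[OF z2, of "b (f j)"] j by (simp add: fE fF)
    qed
    have cf: "c (f j) = 0" if j: "j < nu" for j
    proof -
      have "b (e j) (\<Sum>v\<in>Ab. scale (c v) v) = 0" using bA[of "e j"] j unfolding E0_def by auto
      then show ?thesis using arg_cong[OF z2, of "b (e j)"] j by (simp add: eF eE)
    qed
    have "(\<Sum>v\<in>Ab. scale (c v) v) = 0" using z2 ce cf by simp
    then have ca: "\<forall>a\<in>Ab. c a = 0" using Ab(2) unfolding independent_explicit by blast
    show "c v = 0" using v ce cf ca unfolding S0_def E0_def F0_def by auto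
  qed
  have "card S0 = dim (UNIV :: 'v set)" by (rule basis_card_eq_dim) (use sp ind in auto)
  then show ?thesis using cS by simp
qed

lemma card_Ix: "card Ix = 2 * nu * nu - nu + 2 * nu * card Ab"
proof -
  have c1: "card I1 = 2 * nu * nu - nu"
  proof -
    have eq: "I1 = ({..<nu} \<times> {..<nu} \<times> (UNIV :: bool set)) - (\<lambda>i. (i,i,True)) ` {..<nu}"
      unfolding I1_def by auto
    have "card (({..<nu} \<times> {..<nu} \<times> (UNIV :: bool set))) = nu * (nu * 2)"
      by (simp add: card_cartesian_product)
    moreover have "card ((\<lambda>i. (i,i,True)) ` {..<nu}) = nu" by (simp add: card_image inj_on_def)
    ultimately show ?thesis unfolding eq by (subst card_Diff_subset) auto
  qed
  have c2: "card I2 = 2 * nu * card Ab"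
  proof -
    have "I2 = {..<nu} \<times> Ab \<times> (UNIV :: bool set)" unfolding I2_def by auto
    then show ?thesis by (simp add: card_cartesian_product)
  qed
  have "card Ix = card (Inl ` I1 :: ((nat \<times> nat \<times> bool) + (nat \<times> 'v \<times> bool)) set) + card (Inr ` I2 :: ((nat \<times> nat \<times> bool) + (nat \<times> 'v \<times> bool)) set)"
    unfolding Ix_def using finite_I1 finite_I2 by (intro card_Un_disjoint) auto
  also have "\<dots> = card I1 + card I2" by (simp add: card_image)
  finally show ?thesis using c1 c2 by simp
qed

theorem WD_main:
  shows "K_subspace (fixed_field st) (\<lambda>k u x. scale k (u x)) (WH scale b Fl nu)"
    and "K_dim_eq (fixed_field st) (\<lambda>k u x. scale k (u x)) (WH scale b Fl nu)
        (nu * (2 * dim (UNIV :: 'v set) - 2 * nu - 1))"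
proof -
  show "K_subspace (fixed_field st) (\<lambda>k u x. scale k (u x)) (WH scale b Fl nu)"
    unfolding K_subspace_def fixed_field_def
  proof (intro conjI ballI)
    show "0 \<in> WH scale b Fl nu" using WH_iff Cond_0 by (simp add: zero_fun_def)
  next
    fix u v assume "u \<in> WH scale b Fl nu" "v \<in> WH scale b Fl nu"
    then have "Cond (\<lambda>x. u x + v x)" using WH_iff Cond_add by blast
    then show "u + v \<in> WH scale b Fl nu" using WH_iff by (simp add: plus_fun_def)
  next
    fix k u assume "k \<in> {x. st x = x}" "u \<in> WH scale b Fl nu"
    then show "(\<lambda>x. scale k (u x)) \<in> WH scale b Fl nu" using WH_iff Cond_smul by auto
  qed
  have S_eq: "WH scale b Fl nu = {(\<Sum>s\<in>Ix. smul (x s) (psi s)) | x. \<forall>s\<in>Ix. x s \<in> fixed_field st}"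
  proof
    show "WH scale b Fl nu \<subseteq> {(\<Sum>s\<in>Ix. smul (x s) (psi s)) | x. \<forall>s\<in>Ix. x s \<in> fixed_field st}"
    proof
      fix u assume "u \<in> WH scale b Fl nu"
      then obtain x where "\<forall>s\<in>Ix. st (x s) = x s" "u = vv x" using WH_vv by blast
      then show "u \<in> {(\<Sum>s\<in>Ix. smul (x s) (psi s)) | x. \<forall>s\<in>Ix. x s \<in> fixed_field st}"
        unfolding vv_def fixed_field_def mem_Collect_eq by (intro exI[of _ x]) auto
    qed
  next
    show "{(\<Sum>s\<in>Ix. smul (x s) (psi s)) | x. \<forall>s\<in>Ix. x s \<in> fixed_field st} \<subseteq> WH scale b Fl nu"
      using vv_WH unfolding vv_def fixed_field_def by auto
  qed
  have uq: "\<forall>s\<in>Ix. x s = x' s"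
    if "\<forall>s\<in>Ix. x s \<in> fixed_field st" "\<forall>s\<in>Ix. x' s \<in> fixed_field st"
      "(\<Sum>s\<in>Ix. smul (x s) (psi s)) = (\<Sum>s\<in>Ix. smul (x' s) (psi s))" for x x'
    using vv_uniq[of x x'] that unfolding vv_def fixed_field_def by auto
  have "K_dim_eq (fixed_field st) (\<lambda>k u x. scale k (u x)) (WH scale b Fl nu) (card Ix)"
    by (rule GL2[OF finite_Ix uq S_eq]) (auto simp: fixed_field_def)
  moreover have "card Ix = nu * (2 * dim (UNIV :: 'v set) - 2 * nu - 1)"
  proof (cases nu)
    case 0 then show ?thesis using card_Ix by simp
  next
    case (Suc m)
    show ?thesis unfolding card_Ix dimV using Suc by (simp add: algebra_simps)
  qed
  ultimately show "K_dim_eq (fixed_field st) (\<lambda>k u x. scale k (u x)) (WH scale b Fl nu)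
        (nu * (2 * dim (UNIV :: 'v set) - 2 * nu - 1))" by simp
qed

end


lemma vs_self: "vector_space ((*) :: 'a::field \<Rightarrow> 'a \<Rightarrow> 'a)"
  unfolding vector_space_def module_def by (simp add: algebra_simps)
context HB begin

lemma Bas_uniq: "(\<Sum>v\<in>Bas. scale (g v) v) = (\<Sum>v\<in>Bas. scale (h v) v) \<Longrightarrow> v \<in> Bas \<Longrightarrow> g v = h v"
proof -
  assume eq: "(\<Sum>v\<in>Bas. scale (g v) v) = (\<Sum>v\<in>Bas. scale (h v) v)" and v: "v \<in> Bas"
  have "(\<Sum>v\<in>Bas. scale (g v - h v) v) = 0" using eq
    by (simp add: scale_left_diff_distrib sum_subtractf)
  then show ?thesis using independent_Basis v unfolding independent_explicit by auto
qed

lemma agree_span: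
  assumes lam: "Vector_Spaces.linear scale (*) lam" and ag: "\<forall>v\<in>Bas. b z v = lam v"
  shows "b z x = lam x"
proof -
  have la: "lam (x + y) = lam x + lam y" "lam (scale c x) = c * lam x" for x y c
    using lam unfolding Vector_Spaces.linear_iff by auto
  have sub: "subspace {x. b z x = lam x}"
  proof -
    have "lam 0 = 0" using la(2)[of 0 0] by simp
    then show ?thesis unfolding subspace_def using la by auto
  qed
  have "span Bas \<subseteq> {x. b z x = lam x}" using ag sub by (intro span_minimal) auto
  then show ?thesis using span_Basis by auto
qed

lemma riesz:
  assumes lam: "Vector_Spaces.linear scale (*) lam"
  shows "\<exists>z. \<forall>x. b z x = lam x"
proof -
  define Psi where "Psi z = (\<Sum>v\<in>Bas. scale (st (b z v)) v)" for z
  have lin: "Vector_Spaces.linear scale scale Psi"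
    unfolding Vector_Spaces.linear_iff Psi_def using vector_space_axioms
    by (simp add: sum.distrib scale_left_distrib scale_sum_right)
  have z0: "z = 0" if "Psi z = 0" for z
  proof -
    have eq: "(\<Sum>v\<in>Bas. scale (st (b z v)) v) = (\<Sum>v\<in>Bas. scale ((\<lambda>_. 0) v) v)"
      using that unfolding Psi_def by simp
    have "\<forall>v\<in>Bas. st (b z v) = 0"
    proof
      fix v assume "v \<in> Bas"
      from Bas_uniq[OF eq this] show "st (b z v) = 0" by simp
    qed
    then have "\<forall>v\<in>Bas. b z v = 0" by (simp del: st_b)
    then have "b z x = 0" for x using agree_span[of "\<lambda>_. 0" z x] vector_space_axioms vs_self
      unfolding Vector_Spaces.linear_iff by simp
    then show ?thesis using nondeg_l by blast
  qed
  have "inj Psi"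
  proof (rule injI)
    fix x y assume "Psi x = Psi y"
    then have "Psi (x - y) = 0" by (simp add: lin_diff[OF lin])
    then have "x - y = 0" by (rule z0)
    then show "x = y" by simp
  qed
  then have "surj Psi" using linear_inj_imp_surj[OF lin] by blast
  then obtain z where z: "Psi z = (\<Sum>v\<in>Bas. scale (st (lam v)) v)" by (metis surjD)
  have "\<forall>v\<in>Bas. st (b z v) = st (lam v)" using Bas_uniq[OF z[unfolded Psi_def]] by blast
  then have "\<forall>v\<in>Bas. b z v = lam v" by (simp del: st_b)
  then show ?thesis using agree_span[OF lam] by blast
qed

lemma tau_ex: "\<exists>t. t + st t \<noteq> 0"
proof (cases "th + st th = 0")
  case True
  have "1 + st 1 \<noteq> (0::'f)"
  proof
    assume "1 + st 1 = (0::'f)"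
    then have two: "(1::'f) + 1 = 0" by simp
    have "st th = - th" using True by (simp add: eq_neg_iff_add_eq_0 add.commute)
    also have "- th = th" using two by (metis add.inverse_unique distrib_left mult.right_neutral mult_zero_right)
    finally show False using th by simp
  qed
  then show ?thesis by blast
qed blast


lemma hyp_pairs:
  fixes e :: "nat \<Rightarrow> 'v"
  assumes ind: "independent (e ` {..<nu})" and inj: "inj_on e {..<nu}"
    and ee: "\<And>i j. i < nu \<Longrightarrow> j < nu \<Longrightarrow> b (e i) (e j) = 0"
  shows "\<exists>f. \<forall>i<nu. \<forall>j<nu. b (e i) (f j) = (if i = j then 1 else 0) \<and> b (f i) (f j) = 0"
proof -
  obtain B where B: "e ` {..<nu} \<subseteq> B" "B \<subseteq> UNIV" "independent B" "UNIV \<subseteq> span B"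
    by (rule maximal_independent_subset_extend[OF subset_UNIV ind])
  have spB: "span B = UNIV" using B(4) by auto
  have "\<forall>j. \<exists>z. \<forall>x. b z x = representation B x (e j)"
  proof
    fix j
    show "\<exists>z. \<forall>x. b z x = representation B x (e j)"
      by (rule riesz[OF linear_representation[OF B(3) spB, of "e j"]])
  qed
  then have "\<exists>g. \<forall>j. \<forall>x. b (g j) x = representation B x (e j)" by (rule choice)
  then obtain g where g: "\<And>j x. b (g j) x = representation B x (e j)" by blast
  have ge: "b (g j) (e i) = (if i = j then 1 else 0)" if "i < nu" "j < nu" for i j
  proof -
    have "e i \<in> B" using B(1) that by auto
    then have "representation B (e i) (e j) = (if e j = e i then 1 else 0)"
      using representation_basis[OF B(3)] by simp
    also have "\<dots> = (if i = j then 1 else 0)" using inj that by (auto simp: inj_on_def)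
    finally show ?thesis using g by simp
  qed
  have eg: "b (e i) (g j) = (if i = j then 1 else 0)" if "i < nu" "j < nu" for i j
    using ge[OF that] b_sym[of "e i" "g j"] by (simp del: st_b)
  obtain t where t: "t + st t \<noteq> 0" using tau_ex by blast
  define s where "s l j = (if l < j then b (g l) (g j) else if l = j then b (g j) (g j) * t / (t + st t) else 0)" for l j
  define f where "f j = g j - (\<Sum>l<nu. scale (s l j) (e l))" for j
  have sum1: "b (e i) (\<Sum>l<nu. scale (c l) (e l)) = 0" if "i < nu" for i c
    unfolding b_sum_r using that by (intro sum.neutral) (auto simp: ee)
  have sum2: "b (g i) (\<Sum>l<nu. scale (c l) (e l)) = c i" if i: "i < nu" for i c
  proof -
    have "b (g i) (\<Sum>l<nu. scale (c l) (e l)) = (\<Sum>l<nu. if l = i then c l else 0)"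
      unfolding b_sum_r using i by (intro sum.cong) (auto simp: ge)
    then show ?thesis using i by simp
  qed
  have sum3: "b (\<Sum>l<nu. scale (c l) (e l)) (g j) = st (c j)" if j: "j < nu" for j c
  proof -
    have "b (\<Sum>l<nu. scale (c l) (e l)) (g j) = (\<Sum>l<nu. if l = j then st (c l) else 0)"
      unfolding b_sum_l using j by (intro sum.cong) (auto simp: eg)
    then show ?thesis using j by simp
  qed
  have sum4: "b (\<Sum>l<nu. scale (c l) (e l)) (\<Sum>l<nu. scale (d l) (e l)) = 0" for c d
    unfolding b_sum_l by (intro sum.neutral) (auto simp: sum1)
  have ef: "b (e i) (f j) = (if i = j then 1 else 0)" if "i < nu" "j < nu" for i j
    unfolding f_def using that by (simp add: eg sum1)
  have ff: "b (f i) (f j) = 0" if i: "i < nu" and j: "j < nu" for i j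
  proof -
    have "b (f i) (f j) = b (g i) (g j) - s i j - st (s j i)"
      unfolding f_def using i j by (simp add: sum2 sum3 sum4)
    also have "\<dots> = 0"
    proof (cases i j rule: linorder_cases)
      case less then show ?thesis unfolding s_def by simp
    next
      case greater then show ?thesis unfolding s_def by simp
    next
      case equal
      define B0 where "B0 = b (g j) (g j)"
      define T where "T = t + st t"
      have T: "T \<noteq> 0" using t unfolding T_def .
      have sT: "st T = T" unfolding T_def by (simp add: add.commute)
      have sjj: "s j j = B0 * t / T" unfolding s_def B0_def T_def by simp
      have ssjj: "st (s j j) = B0 * st t / T" unfolding sjj using sT by (simp add: B0_def)
      have "B0 * t / T + B0 * st t / T = B0 * T / T" unfolding T_def
        by (simp add: distrib_left add_divide_distrib)
      also have "\<dots> = B0" using T by simp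
      finally have key: "B0 * t / T + B0 * st t / T = B0" .
      have "B0 - s j j - st (s j j) = B0 - (B0 * t / T + B0 * st t / T)"
        using sT unfolding sjj by (simp add: algebra_simps B0_def)
      then have "B0 - s j j - st (s j j) = 0" unfolding key by simp
      then show ?thesis using equal unfolding B0_def by simp
    qed
    finally show ?thesis .
  qed
  show ?thesis using ef ff by blast
qed


lemma flag_basis:
  assumes fl: "partially_complete_flag scale Fl p"
  shows "\<exists>e. (\<forall>i\<le>p. Fl i = span (e ` {..<i})) \<and> independent (e ` {..<p}) \<and> inj_on e {..<p}"
proof -
  have sub: "subspace (Fl i)" and dm: "dim (Fl i) = i" if "i \<le> p" for i
    using fl that unfolding partially_complete_flag_def by auto
  have mono: "Fl i \<subseteq> Fl (Suc i)" if "i < p" for i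
    using fl that unfolding partially_complete_flag_def by auto
  have ex: "\<exists>x. x \<in> Fl (Suc i) \<and> x \<notin> Fl i" if i: "i < p" for i
  proof (rule ccontr)
    assume "\<not> ?thesis"
    then have "Fl (Suc i) \<subseteq> Fl i" by blast
    then have "dim (Fl (Suc i)) \<le> dim (Fl i)" by (rule dim_subset)
    then show False using dm[of i] dm[of "Suc i"] i by simp
  qed
  define e where "e i = (SOME x. x \<in> Fl (Suc i) \<and> x \<notin> Fl i)" for i
  have e: "e i \<in> Fl (Suc i) \<and> e i \<notin> Fl i" if "i < p" for i
    unfolding e_def by (rule someI_ex[OF ex[OF that]])
  have main: "Fl i = span (e ` {..<i}) \<and> independent (e ` {..<i}) \<and> card (e ` {..<i}) = i" if "i \<le> p" for i
    using that
  proof (induction i)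
    case 0
    have "Fl 0 \<subseteq> {0}" using dm[of 0] by simp
    moreover have "0 \<in> Fl 0" using sub[of 0] by (simp add: subspace_0)
    ultimately have "Fl 0 = {0}" by blast
    then show ?case by (simp add: independent_empty)
  next
    case (Suc i)
    then have i: "i < p" by simp
    have IH: "Fl i = span (e ` {..<i})" "independent (e ` {..<i})" "card (e ` {..<i}) = i"
      using Suc by auto
    have ins: "e ` {..<Suc i} = insert (e i) (e ` {..<i})" by (simp add: lessThan_Suc)
    have ni: "e i \<notin> span (e ` {..<i})" using e[OF i] IH(1) by simp
    have ind: "independent (e ` {..<Suc i})" unfolding ins by (rule independent_insertI[OF ni IH(2)])
    have nin: "e i \<notin> e ` {..<i}"
    proof
      assume "e i \<in> e ` {..<i}"
      then have "e i \<in> span (e ` {..<i})" by (rule span_base)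
      with ni show False by simp
    qed
    have card: "card (e ` {..<Suc i}) = Suc i" unfolding ins using nin IH(3) by simp
    have sp: "span (e ` {..<Suc i}) \<subseteq> Fl (Suc i)"
    proof (rule span_minimal)
      show "e ` {..<Suc i} \<subseteq> Fl (Suc i)" unfolding ins
        using e[OF i] IH(1) span_base mono[OF i] span_superset by auto
      show "subspace (Fl (Suc i))" using sub Suc by simp
    qed
    have "span (e ` {..<Suc i}) = Fl (Suc i)"
    proof (rule subspace_dim_equal[OF subspace_span _ sp])
      show "subspace (Fl (Suc i))" using sub Suc by simp
      have "dim (span (e ` {..<Suc i})) = Suc i" using dim_span_eq_card_independent[OF ind] card by simp
      then show "dim (Fl (Suc i)) \<le> dim (span (e ` {..<Suc i}))" using dm Suc by simp
    qed
    then show ?case using ind card by simp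
  qed
  have inj: "inj_on e {..<p}" using main[of p] by (intro eq_card_imp_inj_on) auto
  show ?thesis using main inj by blast
qed

lemma HB_main:
  assumes flag: "singular_flag scale b Fl (witt_index scale b)"
  shows "K_subspace (fixed_field st) (\<lambda>k u x. scale k (u x)) (WH scale b Fl (witt_index scale b))
    \<and> K_dim_eq (fixed_field st) (\<lambda>k u x. scale k (u x)) (WH scale b Fl (witt_index scale b))
        (witt_index scale b * (2 * dim (UNIV :: 'v set) - 2 * witt_index scale b - 1))"
proof -
  define nu where "nu = witt_index scale b"
  have pcf: "partially_complete_flag scale Fl nu" and ts: "totally_singular scale b (Fl nu)"
    using flag unfolding singular_flag_def nu_def by auto
  obtain e where e: "\<forall>i\<le>nu. Fl i = span (e ` {..<i})" "independent (e ` {..<nu})" "inj_on e {..<nu}"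
    using flag_basis[OF pcf] by blast
  have tsE: "b x z = 0" if "x \<in> span (e ` {..<nu})" "z \<in> span (e ` {..<nu})" for x z
    using ts e(1) that unfolding totally_singular_def by auto
  have ee: "b (e i) (e j) = 0" if "i < nu" "j < nu" for i j
    using tsE that by (auto intro: span_base)
  obtain f where f: "\<forall>i<nu. \<forall>j<nu. b (e i) (f j) = (if i = j then 1 else 0) \<and> b (f i) (f j) = 0"
    using hyp_pairs[OF e(2) e(3) ee] by blast
  have dimE: "dim (e ` {..<nu}) = nu"
    using dim_eq_card_independent[OF e(2)] card_image[OF e(3)] by simp
  have maxl: "y \<in> span (e ` {..<nu})" if y1: "\<forall>i<nu. b (e i) y = 0" and y2: "b y y = 0" for y
  proof (rule ccontr)
    assume ny: "y \<notin> span (e ` {..<nu})"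
    define X where "X = span (insert y (e ` {..<nu}))"
    have s1: "b w z = 0" if w: "w \<in> insert y (e ` {..<nu})" and z: "z \<in> X" for w z
    proof -
      have "insert y (e ` {..<nu}) \<subseteq> {z. \<forall>v\<in>{w}. b v z = 0}"
      proof
        fix z assume z: "z \<in> insert y (e ` {..<nu})"
        have ye: "b y (e j) = 0" if "j < nu" for j
          using b_sym[of y "e j"] y1 that by (simp del: st_b)
        have "b w z = 0"
        proof (cases "w = y")
          case True
          then show ?thesis using z y2 ye by auto
        next
          case False
          then obtain i where i: "i < nu" "w = e i" using w by auto
          then show ?thesis using z y1 ee by auto
        qed
        then show "z \<in> {z. \<forall>v\<in>{w}. b v z = 0}" by simp
      qed
      then have "X \<subseteq> {z. \<forall>v\<in>{w}. b v z = 0}" unfolding X_def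
        by (rule span_minimal) (auto simp: subspace_def)
      then show ?thesis using z by auto
    qed
    have s2: "b x z = 0" if x: "x \<in> X" and z: "z \<in> X" for x z
    proof -
      have "insert y (e ` {..<nu}) \<subseteq> {x. \<forall>v\<in>{z}. b x v = 0}" using s1 z by auto
      then have "X \<subseteq> {x. \<forall>v\<in>{z}. b x v = 0}" unfolding X_def
        by (rule span_minimal) (auto simp: subspace_def)
      then show ?thesis using x by auto
    qed
    have tsX: "totally_singular scale b X" unfolding totally_singular_def X_def
      using s2 unfolding X_def by auto
    have dX: "dim X = nu + 1" unfolding X_def using ny dimE by (simp add: dim_insert)
    have fin: "finite {dim X | X. totally_singular scale b X}"
    proof (rule finite_subset)
      show "{dim X | X. totally_singular scale b X} \<subseteq> {..dimension}" using dim_subset_UNIV by auto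
    qed simp
    have "dim X \<le> witt_index scale b" unfolding witt_index_def
      by (rule Max_ge[OF fin]) (use tsX in blast)
    then show False using dX unfolding nu_def by simp
  qed
  interpret W: WD scale Bas st b th nu e f Fl
  proof unfold_locales
    show "\<And>i j. i < nu \<Longrightarrow> j < nu \<Longrightarrow> b (e i) (e j) = 0" using ee by blast
    show "\<And>i j. i < nu \<Longrightarrow> j < nu \<Longrightarrow> b (e i) (f j) = (if i = j then 1 else 0)" using f by blast
    show "\<And>i j. i < nu \<Longrightarrow> j < nu \<Longrightarrow> b (f i) (f j) = 0" using f by blast
    show "\<And>i. i \<le> nu \<Longrightarrow> Fl i = span (e ` {..<i})" using e by blast
    show "\<And>y. \<forall>i<nu. b (e i) y = 0 \<Longrightarrow> b y y = 0 \<Longrightarrow> y \<in> span (e ` {..<nu})" using maxl by blast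
  qed
  show ?thesis using W.WD_main unfolding nu_def by blast
qed

end

theorem mainTheorem18:
  fixes st :: "'f::field \<Rightarrow> 'f"
    and scale :: "'f \<Rightarrow> 'v::ab_group_add \<Rightarrow> 'v"
    and b :: "'v \<Rightarrow> 'v \<Rightarrow> 'f"
    and n :: nat
    and Fl :: "nat \<Rightarrow> 'v set"
  assumes inv: "nontrivial_involution st"
    and vs: "vector_space scale"
    and fin: "\<exists>B. finite B \<and> module.span scale B = UNIV"
    and dimV: "vector_space.dim scale (UNIV :: 'v set) = n"
    and herm: "hermitian_form st scale b"
    and nondeg: "non_degenerate b"
    and flag: "singular_flag scale b Fl (witt_index scale b)"
  shows "(\<forall>u\<in>WH scale b Fl (witt_index scale b). Vector_Spaces.linear scale scale u)
    \<and> K_subspace (fixed_field st) (\<lambda>k u x. scale k (u x)) (WH scale b Fl (witt_index scale b))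
    \<and> K_dim_eq (fixed_field st) (\<lambda>k u x. scale k (u x)) (WH scale b Fl (witt_index scale b))
        (witt_index scale b * (2 * n - 2 * witt_index scale b - 1))"
proof -
  interpret V: vector_space scale by (rule vs)
  obtain B0 where B0: "finite B0" "V.span B0 = UNIV" using fin by blast
  obtain Bas where Bas: "Bas \<subseteq> UNIV" "V.independent Bas" "UNIV \<subseteq> V.span Bas" "card Bas = V.dim UNIV"
    by (rule V.basis_exists)
  have finBas: "finite Bas" using V.independent_span_bound[OF B0(1) Bas(2)] B0(2) by auto
  interpret FD: finite_dimensional_vector_space scale Bas
    by unfold_locales (use finBas Bas in auto)
  have st: "\<And>x y. st (x + y) = st x + st y" "\<And>x y. st (x * y) = st x * st y" "\<And>x. st (st x) = x"
    and nid: "st \<noteq> id" using inv unfolding nontrivial_involution_def by auto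
  obtain th where th: "st th \<noteq> th" using nid unfolding fun_eq_iff id_def by auto
  interpret H: HB scale Bas st b th
    by unfold_locales (use st th herm nondeg in auto)
  have hm: "K_subspace (fixed_field st) (\<lambda>k u x. scale k (u x)) (WH scale b Fl (witt_index scale b))
    \<and> K_dim_eq (fixed_field st) (\<lambda>k u x. scale k (u x)) (WH scale b Fl (witt_index scale b))
        (witt_index scale b * (2 * V.dim (UNIV :: 'v set) - 2 * witt_index scale b - 1))"
    by (rule H.HB_main[OF flag])
  have lin: "\<forall>u\<in>WH scale b Fl (witt_index scale b). Vector_Spaces.linear scale scale u"
    unfolding WH_def herm_endos_def by auto
  show ?thesis using lin hm dimV by simp
qed

end
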